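(* Let $n\ge2$ be an integer and $q=1/n$. Let $\mathcal{I}_2$ be the instance of the online volunteer notification problem with $V=n$ volunteers, $S=1$ task type, $T=n^2+1$, $g(\tau)=q(1-q)^{\tau-1}$ for $\tau\in\mathbb{N}$, arrival probabilities $\lambda_{1,1}=1$ and $\lambda_{1,t}=q$ for $2\le t\le T$, and match probabilities $p_{v,1}=q$ for all $v\in[V]$. Then the expected number of tasks completed by any online policy on $\mathcal{I}_2$ is at most $\Big[1+q-\frac{q(1-q)}{\log\left(\frac{1}{1-q}\right)(1+q)}\left(1-e^{-1}\right)\Big]\mathbf{LP}_{\mathcal{I}_2}$.
   Context: Online volunteer notification problem. An instance $\mathcal{I}$ consists of volunteers $[V]$, task types $[S]$, horizon $T$, arrival probabilities $\lambda_{s,t}\ge0$ with $\sum_s\lambda_{s,t}\le1$, match probabilities $p_{v,s}\in[0,1]$, and a probability mass function $g$ on the positive integers with CDF $G(\tau)=\sum_{i\le\tau}g(i)$, $G(0)=0$. In each period $t$ at most one task arrives, of type $s$ with probability $\lambda_{s,t}$, independently across periods. All volunteers start active. Upon an arrival the platform immediately and irrevocably notifies a subset of volunteers; each notified active volunteer $v$ responds positively independently with probability $p_{v,s}$; the task is completed iff at least one does. A volunteer active and notified at time $t$ becomes inactive (regardless of response) and active again at $t+Z$, $Z\sim g$ independent; inactive volunteers ignore notifications and are unaffected by them. The platform knows $\lambda,p,g$ but not states; an online policy decides whom to notify using only information available up to the current period. $\mathbf{LP}_{\mathcal{I}}=\max\sum_{t,s}\lambda_{s,t}\min\{\sum_vx_{v,s,t}p_{v,s},1\}$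 subject to $0\le x_{v,s,t}\le1$ and $\sum_{\tau=1}^t\sum_s\lambda_{s,\tau}x_{v,s,\tau}(1-G(t-\tau))\le1$ for all $v,t$. *)

theory Defs
  imports "HOL-Probability.Probability"
begin

(* Volunteers are 1..V, task types 1..S, periods 1..T.
   lam s t = arrival probability of type s in period t; p v s = match probability;
   g = pmf of the reactivation delay Z (supported on positive integers). *)

definition cdfG :: "nat pmf \<Rightarrow> nat \<Rightarrow> real" where
  "cdfG g \<tau> = (\<Sum>i\<in>{1..\<tau>}. pmf g i)"

(* distribution of the arrival in period t: None = no arrival, Some s = task of type s *)
definition arrival_pmf :: "nat \<Rightarrow> (nat \<Rightarrow> nat \<Rightarrow> real) \<Rightarrow> nat \<Rightarrow> nat option pmf" where
  "arrival_pmf S lam t = embed_pmf (\<lambda>a. case a of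
       None \<Rightarrow> 1 - (\<Sum>s\<in>{1..S}. lam s t)
     | Some s \<Rightarrow> (if s \<in> {1..S} then lam s t else 0))"

(* Information observed by the platform in a period: nothing arrived, or
   (type of the arrived task, set of notified volunteers, set of volunteers
   who responded positively). *)
type_synonym history = "(nat \<times> nat set \<times> nat set) option list"

(* A (deterministic) online policy: given the observed history of all previous
   periods and the type of the current arrival, choose the set to notify. *)
type_synonym policy = "history \<Rightarrow> nat \<Rightarrow> nat set"

(* run ... k t ret h : distribution of the number of tasks completed during the
   k periods t, t+1, ..., t+k-1, when volunteer v is active at time t' iff ret v \<le> t'
   and the observed history so far is h. *)
primrec run :: "nat \<Rightarrow> nat \<Rightarrow> (nat \<Rightarrow> nat \<Rightarrow> real) \<Rightarrow> (nat \<Rightarrow> nat \<Rightarrow> real) \<Rightarrow> nat pmf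
    \<Rightarrow> policy \<Rightarrow> nat \<Rightarrow> nat \<Rightarrow> (nat \<Rightarrow> nat) \<Rightarrow> history \<Rightarrow> real pmf" where
  "run V S lam p g pol 0 t ret h = return_pmf 0"
| "run V S lam p g pol (Suc k) t ret h =
     bind_pmf (arrival_pmf S lam t) (\<lambda>a. case a of
        None \<Rightarrow> run V S lam p g pol k (Suc t) ret (h @ [None])
      | Some s \<Rightarrow>
          (let N = pol h s \<inter> {1..V};
               A = {v \<in> N. ret v \<le> t}
           in bind_pmf (Pi_pmf A False (\<lambda>v. bernoulli_pmf (p v s))) (\<lambda>r.
              bind_pmf (Pi_pmf A 0 (\<lambda>v. g)) (\<lambda>z.
                let P = {v \<in> A. r v};
                    ret' = (\<lambda>v. if v \<in> A then t + z v else ret v)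
                in map_pmf (\<lambda>x. (if P = {} then 0 else 1) + x)
                     (run V S lam p g pol k (Suc t) ret' (h @ [Some (s, N, P)]))))))"

(* expected number of tasks completed by policy pol over periods 1..T; all volunteers start active *)
definition expected_completed :: "nat \<Rightarrow> nat \<Rightarrow> nat \<Rightarrow> (nat \<Rightarrow> nat \<Rightarrow> real) \<Rightarrow> (nat \<Rightarrow> nat \<Rightarrow> real)
    \<Rightarrow> nat pmf \<Rightarrow> policy \<Rightarrow> real" where
  "expected_completed V S T lam p g pol =
     measure_pmf.expectation (run V S lam p g pol T 1 (\<lambda>_. 0) []) (\<lambda>x. x)"

definition lp_feasible :: "nat \<Rightarrow> nat \<Rightarrow> nat \<Rightarrow> (nat \<Rightarrow> nat \<Rightarrow> real) \<Rightarrow> nat pmf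
    \<Rightarrow> (nat \<Rightarrow> nat \<Rightarrow> nat \<Rightarrow> real) \<Rightarrow> bool" where
  "lp_feasible V S T lam g x \<longleftrightarrow>
     (\<forall>v\<in>{1..V}. \<forall>s\<in>{1..S}. \<forall>t\<in>{1..T}. 0 \<le> x v s t \<and> x v s t \<le> 1) \<and>
     (\<forall>v\<in>{1..V}. \<forall>t\<in>{1..T}.
        (\<Sum>\<tau>\<in>{1..t}. \<Sum>s\<in>{1..S}. lam s \<tau> * x v s \<tau> * (1 - cdfG g (t - \<tau>))) \<le> 1)"

definition lp_obj :: "nat \<Rightarrow> nat \<Rightarrow> nat \<Rightarrow> (nat \<Rightarrow> nat \<Rightarrow> real) \<Rightarrow> (nat \<Rightarrow> nat \<Rightarrow> real)
    \<Rightarrow> (nat \<Rightarrow> nat \<Rightarrow> nat \<Rightarrow> real) \<Rightarrow> real" where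
  "lp_obj V S T lam p x =
     (\<Sum>t\<in>{1..T}. \<Sum>s\<in>{1..S}. lam s t * min (\<Sum>v\<in>{1..V}. x v s t * p v s) 1)"

definition LP :: "nat \<Rightarrow> nat \<Rightarrow> nat \<Rightarrow> (nat \<Rightarrow> nat \<Rightarrow> real) \<Rightarrow> (nat \<Rightarrow> nat \<Rightarrow> real)
    \<Rightarrow> nat pmf \<Rightarrow> real" where
  "LP V S T lam p g = Sup {lp_obj V S T lam p x | x. lp_feasible V S T lam g x}"

end

theory Submission
  imports Defs
begin

lemma tele_aux: fixes k a :: real assumes "a > 0" "k \<ge> 0" shows "1 - 1 / ((k + 2) * a) + 1 / ((k + 3) * a) = 1 - 1 / ((k + 3) * ((k + 2) * a))"
proof -
  have "k+2 \<noteq> 0" "k+3 \<noteq> 0" "a \<noteq> 0" using assms by auto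
  then show ?thesis by (simp add: divide_simps) (simp add: algebra_simps)
qed

lemma tele_fact: "(\<Sum>k\<le>K. 1 / ((real k + 2) * fact k)) = 1 - 1 / fact (K + 2)"
proof (induction K)
  case 0 then show ?case by (simp add: numeral_2_eq_2)
next
  case (Suc K)
  have f1: "(fact (Suc K + 2)::real) = (real K + 3) * fact (K + 2)"
    by (simp only: fact_Suc numeral_3_eq_3 numeral_2_eq_2 add_Suc_right add_0_right of_nat_Suc) (simp add: algebra_simps)
  have f2: "(fact (K + 2)::real) = (real K + 2) * fact (Suc K)"
    by (simp only: fact_Suc numeral_3_eq_3 numeral_2_eq_2 add_Suc_right add_0_right of_nat_Suc) (simp add: algebra_simps)
  have f3: "real (Suc K) + 2 = real K + 3" by simp
  have pos: "fact (Suc K) > (0::real)" by simp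
  have "(\<Sum>k\<le>Suc K. 1 / ((real k + 2) * fact k)) = (1 - 1 / fact (K + 2)) + 1 / ((real (Suc K) + 2) * fact (Suc K))"
    by (simp only: sum.atMost_Suc Suc.IH)
  also have "\<dots> = 1 - 1 / ((real K + 2) * fact (Suc K)) + 1 / ((real K + 3) * fact (Suc K))"
    by (simp only: f2 f3)
  also have "\<dots> = 1 - 1 / ((real K + 3) * ((real K + 2) * fact (Suc K)))"
    by (rule tele_aux[OF pos]) simp
  also have "\<dots> = 1 - 1 / fact (Suc K + 2)" by (simp only: f1 f2)
  finally show ?case .
qed

lemma choose_fact_le:
  assumes "m \<le> N"
  shows "real (m choose k) / real N ^ k \<le> 1 / fact k"
proof (cases "N = 0")
  case True then show ?thesis using assms by (cases k) auto
next
  case False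
  have "(m choose k) * fact k \<le> m ^ k" by (rule binomial_fact_pow)
  also have "m ^ k \<le> N ^ k" using assms by (simp add: power_mono)
  finally have "real (m choose k) * fact k \<le> real N ^ k"
    by (metis of_nat_fact of_nat_le_iff of_nat_mult of_nat_power)
  then show ?thesis using False by (simp add: field_simps)
qed

lemma A1a:
  assumes "m \<le> N"
  shows "(\<Sum>k\<le>K. real (m choose k) / ((real k + 2) * real N ^ k)) \<le> 1"
proof -
  have "(\<Sum>k\<le>K. real (m choose k) / ((real k + 2) * real N ^ k))
      \<le> (\<Sum>k\<le>K. 1 / ((real k + 2) * fact k))"
  proof (rule sum_mono)
    fix k assume "k \<in> {..K}"
    have "real (m choose k) / ((real k + 2) * real N ^ k)
        = (real (m choose k) / real N ^ k) / (real k + 2)" by (simp add: field_simps)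
    also have "\<dots> \<le> (1 / fact k) / (real k + 2)"
      by (intro divide_right_mono choose_fact_le assms) auto
    finally show "real (m choose k) / ((real k + 2) * real N ^ k) \<le> 1 / ((real k + 2) * fact k)"
      by (simp add: field_simps)
  qed
  also have "\<dots> \<le> 1" by (simp add: tele_fact)
  finally show ?thesis .
qed

lemma A1_step:
  assumes N: "N \<ge> 1" and m: "m \<le> N"
  shows "(\<Sum>i\<le>Suc N. (real (Suc m choose i) - real (m choose i)) / ((real i + 1) * real N ^ i)) \<le> 1 / real N"
proof -
  have "(\<Sum>i\<le>Suc N. (real (Suc m choose i) - real (m choose i)) / ((real i + 1) * real N ^ i))
     = (\<Sum>i\<le>N. (real (Suc m choose Suc i) - real (m choose Suc i)) / ((real (Suc i) + 1) * real N ^ Suc i))"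
    by (subst sum.atMost_Suc_shift) simp
  also have "\<dots> = (\<Sum>i\<le>N. real (m choose i) / ((real i + 2) * real N ^ i)) / real N"
    unfolding sum_divide_distrib
    by (intro sum.cong refl) (simp add: field_simps)
  also have "\<dots> \<le> 1 / real N"
    using A1a[OF m, of N] N by (intro divide_right_mono) auto
  finally show ?thesis .
qed

lemma A1:
  assumes N: "N \<ge> 1"
  shows "m + d = Suc N \<Longrightarrow> (\<Sum>i\<le>Suc N. (real (Suc N choose i) - real (m choose i)) / ((real i + 1) * real N ^ i)) \<le> (1 + 1 / real N) ^ d - 1"
proof (induction d arbitrary: m)
  case 0 then show ?case by simp
next
  case (Suc d)
  have m: "m \<le> N" using Suc.prems by simp
  have IH: "(\<Sum>i\<le>Suc N. (real (Suc N choose i) - real (Suc m choose i)) / ((real i + 1) * real N ^ i)) \<le> (1 + 1 / real N) ^ d - 1"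
    using Suc.IH[of "Suc m"] Suc.prems by simp
  have "(\<Sum>i\<le>Suc N. (real (Suc N choose i) - real (m choose i)) / ((real i + 1) * real N ^ i))
      = (\<Sum>i\<le>Suc N. (real (Suc N choose i) - real (Suc m choose i)) / ((real i + 1) * real N ^ i))
       + (\<Sum>i\<le>Suc N. (real (Suc m choose i) - real (m choose i)) / ((real i + 1) * real N ^ i))"
    by (subst sum.distrib[symmetric], rule sum.cong, simp, simp add: add_divide_distrib[symmetric])
  also have "\<dots> \<le> ((1 + 1 / real N) ^ d - 1) + 1 / real N"
    by (intro add_mono IH A1_step N m)
  also have "\<dots> \<le> (1 + 1 / real N) ^ Suc d - 1"
  proof -
    have "1 \<le> (1 + 1 / real N) ^ d" by (simp add: one_le_power)
    then have "1 * (1 / real N) \<le> (1 + 1 / real N) ^ d * (1 / real N)" using N by (intro mult_right_mono) auto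
    then show ?thesis by (simp add: algebra_simps)
  qed
  finally show ?case .
qed


locale nn =
  fixes n :: nat
  assumes n2: "2 \<le> n"
begin

definition q :: real where "q = 1 / real n"
definition r :: real where "r = 1 - q"

lemma q_pos: "0 < q" and q_lt1: "q < 1" and r_pos: "0 < r" and r_lt1: "r < 1"
  and q_le_half: "q \<le> 1/2" and qr: "q + r = 1"
  using n2 by (auto simp: q_def r_def field_simps)

lemma nq: "real n * q = 1" using n2 by (simp add: q_def)

definition CF :: "nat \<Rightarrow> nat \<Rightarrow> nat \<Rightarrow> real" where
  "CF s a m = (\<Sum>i\<le>m. real (m choose i) * q ^ (i+1) * r ^ (a + m - i + s * i) / (1 - r ^ (i+1)))"

lemma sums_CF:
  "(\<lambda>j. q * r ^ j * r ^ a * (r + q * r ^ (j + s)) ^ m) sums CF s a m"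
proof -
  have eq: "q * r ^ j * r ^ a * (r + q * r ^ (j + s)) ^ m =
      (\<Sum>i\<le>m. real (m choose i) * q ^ (i+1) * r ^ (a + m - i + s * i) * (r ^ (i+1)) ^ j)" for j
  proof -
    have "(r + q * r ^ (j + s)) ^ m = (q * r ^ (j + s) + r) ^ m" by (simp add: add.commute)
    also have "\<dots> = (\<Sum>i\<le>m. real (m choose i) * (q * r ^ (j + s)) ^ i * r ^ (m - i))"
      by (rule binomial_ring)
    finally have "q * r ^ j * r ^ a * (r + q * r ^ (j + s)) ^ m =
       (\<Sum>i\<le>m. q * r ^ j * r ^ a * (real (m choose i) * (q * r ^ (j + s)) ^ i * r ^ (m - i)))"
      by (simp add: sum_distrib_left)
    also have "\<dots> = (\<Sum>i\<le>m. real (m choose i) * q ^ (i+1) * r ^ (a + m - i + s * i) * (r ^ (i+1)) ^ j)"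
    proof (rule sum.cong[OF refl])
      fix i assume "i \<in> {..m}"
      then have im: "i \<le> m" by simp
      have e: "r ^ (a + m - i + s * i) * (r ^ (i+1)) ^ j = r ^ j * r ^ a * (r ^ (j+s)) ^ i * r ^ (m - i)"
      proof -
        have "r ^ (a + m - i + s * i) * (r ^ (i+1)) ^ j = r ^ (a + m - i + s * i + (i+1) * j)"
          by (simp add: power_add power_mult power_mult_distrib)
        also have "a + m - i + s * i + (i+1) * j = j + a + (j+s) * i + (m - i)"
          using im by (simp add: algebra_simps)
        also have "r ^ \<dots> = r ^ j * r ^ a * (r ^ (j+s)) ^ i * r ^ (m - i)"
          by (simp add: power_add power_mult)
        finally show ?thesis .
      qed
      show "q * r ^ j * r ^ a * (real (m choose i) * (q * r ^ (j + s)) ^ i * r ^ (m - i)) =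
         real (m choose i) * q ^ (i+1) * r ^ (a + m - i + s * i) * (r ^ (i+1)) ^ j"
        by (simp only: mult.assoc e) (simp add: power_mult_distrib algebra_simps)
    qed
    finally show ?thesis .
  qed
  have "(\<lambda>j. \<Sum>i\<le>m. real (m choose i) * q ^ (i+1) * r ^ (a + m - i + s * i) * (r ^ (i+1)) ^ j)
        sums (\<Sum>i\<le>m. real (m choose i) * q ^ (i+1) * r ^ (a + m - i + s * i) * (1 / (1 - r ^ (i+1))))"
  proof (rule sums_sum)
    fix i
    have "0 < r ^ (i+1)" "r ^ (i+1) < 1" using power_Suc_less_one[OF r_pos r_lt1, of i] r_pos by auto
    then have "norm (r ^ (i+1)) < 1" by simp
    then have "(\<lambda>j. (r ^ (i+1)) ^ j) sums (1 / (1 - r ^ (i+1)))" by (rule geometric_sums)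
    then show "(\<lambda>j. real (m choose i) * q ^ (i+1) * r ^ (a + m - i + s * i) * (r ^ (i+1)) ^ j) sums
          (real (m choose i) * q ^ (i+1) * r ^ (a + m - i + s * i) * (1 / (1 - r ^ (i+1))))"
      by (rule sums_mult)
  qed
  then show ?thesis unfolding eq CF_def by simp
qed

lemma one_minus_pow_ge: "(real i + 1) * q * r ^ i \<le> 1 - r ^ (i+1)"
proof (induction i)
  case 0 then show ?case using qr by simp
next
  case (Suc i)
  have "r ^ (i+1) \<le> r ^ i" using r_pos r_lt1 by (simp add: power_decreasing)
  then have "q * r ^ (i+1) \<le> q * r ^ i" using q_pos by simp
  have "(real (Suc i) + 1) * q * r ^ Suc i = (real i + 1) * q * r ^ i * r + q * r ^ (i+1)"
    by (simp add: algebra_simps)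
  also have "\<dots> \<le> (1 - r ^ (i+1)) + q * r ^ (i+1)"
  proof -
    have "(real i + 1) * q * r ^ i * r \<le> (real i + 1) * q * r ^ i"
      using r_lt1 q_pos r_pos by (intro mult_left_le) auto
    then show ?thesis using Suc.IH by linarith
  qed
  also have "\<dots> = 1 - r ^ (Suc i + 1)" unfolding r_def by (simp add: algebra_simps)
  finally show ?case .
qed

lemma coef_le: "q ^ (i+1) / (1 - r ^ (i+1)) \<le> 1 / ((real i + 1) * real (n-1) ^ i)"
proof -
  have N: "real (n-1) = real n - 1" using n2 by simp
  have qrN: "q / r = 1 / real (n-1)" using n2 unfolding N r_def q_def by (simp add: field_simps)
  have pos: "0 < (real i + 1) * q * r ^ i" using q_pos r_pos by simp
  have "q ^ (i+1) / (1 - r ^ (i+1)) \<le> q ^ (i+1) / ((real i + 1) * q * r ^ i)"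
    using pos one_minus_pow_ge[of i] q_pos by (intro divide_left_mono) auto
  also have "\<dots> = (q * q ^ i) / (q * ((real i + 1) * r ^ i))" by (simp add: algebra_simps)
  also have "\<dots> = q ^ i / ((real i + 1) * r ^ i)" using q_pos by (intro mult_divide_mult_cancel_left) auto
  also have "\<dots> = (q ^ i / r ^ i) / (real i + 1)" by (simp add: field_simps)
  also have "\<dots> = (q / r) ^ i / (real i + 1)" by (simp add: power_divide)
  also have "\<dots> = 1 / ((real i + 1) * real (n-1) ^ i)" unfolding qrN by (simp add: power_divide)
  finally show ?thesis .
qed

lemma KEYfin:
  assumes b: "b \<le> n"
  shows "(\<Sum>i\<le>n. (real (n choose i) - real ((n-b) choose i)) * (q ^ (i+1) / (1 - r ^ (i+1)))) \<le> (1/r) ^ b - 1"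
proof -
  obtain N where nN: "n = Suc N" and N1: "N \<ge> 1" using n2 by (cases n) auto
  have rN: "1 / r = 1 + 1 / real N" using nN N1 unfolding r_def q_def by (simp add: field_simps)
  have "(\<Sum>i\<le>n. (real (n choose i) - real ((n-b) choose i)) * (q ^ (i+1) / (1 - r ^ (i+1))))
     \<le> (\<Sum>i\<le>n. (real (n choose i) - real ((n-b) choose i)) * (1 / ((real i + 1) * real (n-1) ^ i)))"
  proof (rule sum_mono)
    fix i
    have "(n-b) choose i \<le> n choose i" by (rule binomial_right_mono) simp
    then show "(real (n choose i) - real ((n-b) choose i)) * (q ^ (i+1) / (1 - r ^ (i+1)))
       \<le> (real (n choose i) - real ((n-b) choose i)) * (1 / ((real i + 1) * real (n-1) ^ i))"
      by (intro mult_left_mono coef_le) auto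
  qed
  also have "\<dots> = (\<Sum>i\<le>Suc N. (real (Suc N choose i) - real ((n-b) choose i)) / ((real i + 1) * real N ^ i))"
    by (simp add: nN)
  also have "\<dots> \<le> (1 + 1 / real N) ^ b - 1"
    by (rule A1[OF N1]) (use b nN in simp)
  finally show ?thesis unfolding rN .
qed

end

lemma exp_chord:
  fixes t u :: real
  assumes "0 \<le> t" "t \<le> 1"
  shows "exp (t * u) \<le> 1 - t + t * exp u"
  using convex_onD[OF exp_convex, of t 0 u] assms by simp

context nn
begin

lemma ring_aux1: "(z::real) * ((A - B) * X) = A * X * z - B * X * z" by (simp add: algebra_simps)

lemma CF_shift: "CF 0 a m = q * r ^ a + r * CF 1 a m"
proof -
  let ?f = "\<lambda>j. q * r ^ j * r ^ a * (r + q * r ^ (j + 0)) ^ m"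
  have "(\<lambda>j. r * (q * r ^ j * r ^ a * (r + q * r ^ (j + 1)) ^ m)) sums (r * CF 1 a m)"
    by (intro sums_mult sums_CF)
  moreover have "(\<lambda>j. r * (q * r ^ j * r ^ a * (r + q * r ^ (j + 1)) ^ m)) = (\<lambda>j. ?f (Suc j))"
    by (simp add: algebra_simps)
  ultimately have "(\<lambda>j. ?f (Suc j)) sums (r * CF 1 a m)" by simp
  then have "?f sums (r * CF 1 a m + ?f 0)" by (subst sums_Suc_iff[symmetric]) simp
  moreover have f0: "?f 0 = q * r ^ a"
  proof -
    have rq1: "r + q = 1" using qr by simp
    show ?thesis by (simp add: rq1)
  qed
  ultimately have "?f sums (r * CF 1 a m + q * r ^ a)" by (simp only: f0)
  with sums_CF[of a 0 m] show ?thesis using sums_unique2 by (simp add: add.commute)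
qed

lemma CF0_le1: "CF 0 a m \<le> 1"
proof -
  have "(\<lambda>j. q * r ^ j) sums (q * (1 / (1 - r)))"
    using r_pos r_lt1 by (intro sums_mult geometric_sums) auto
  moreover have "q * (1 / (1 - r)) = 1" using qr q_pos by (simp add: r_def)
  ultimately have g: "(\<lambda>j. q * r ^ j) sums 1" by simp
  have "CF 0 a m \<le> 1"
  proof (rule sums_le[OF _ sums_CF g])
    fix j
    have "r ^ j \<le> 1" using r_pos r_lt1 by (intro power_le_one) auto
    then have "q * r ^ j \<le> q * 1" using q_pos by (intro mult_left_mono) auto
    then have y1: "r + q * r ^ (j + 0) \<le> 1" using qr by simp
    have y0: "0 \<le> r + q * r ^ (j + 0)" using q_pos r_pos by simp
    have "r ^ a * (r + q * r ^ (j + 0)) ^ m \<le> 1 * 1"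
      using r_pos r_lt1 y0 y1 by (intro mult_mono power_le_one) auto
    then have "q * r ^ j * (r ^ a * (r + q * r ^ (j + 0)) ^ m) \<le> q * r ^ j * 1"
      using q_pos r_pos by (intro mult_left_mono) auto
    then show "q * r ^ j * r ^ a * (r + q * r ^ (j + 0)) ^ m \<le> q * r ^ j" by (simp add: mult.assoc)
  qed
  then show ?thesis .
qed

lemma KEY:
  assumes b: "b \<le> n"
  shows "CF 1 0 n - CF 1 b (n - b) \<le> r ^ (n - b) - r ^ n"
proof -
  have e1: "CF 1 0 n = (\<Sum>i\<le>n. real (n choose i) * (q ^ (i+1) / (1 - r ^ (i+1))) * r ^ n)"
    unfolding CF_def
  proof (intro sum.cong refl)
    fix i assume "i \<in> {..n}"
    then have "0 + n - i + 1 * i = n" by simp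
    then show "real (n choose i) * q ^ (i + 1) * r ^ (0 + n - i + 1 * i) / (1 - r ^ (i + 1)) =
      real (n choose i) * (q ^ (i + 1) / (1 - r ^ (i + 1))) * r ^ n" by simp
  qed
  have e2: "CF 1 b (n - b) = (\<Sum>i\<le>n. real ((n - b) choose i) * (q ^ (i+1) / (1 - r ^ (i+1))) * r ^ n)"
  proof -
    have "CF 1 b (n - b) = (\<Sum>i\<le>n - b. real ((n - b) choose i) * (q ^ (i+1) / (1 - r ^ (i+1))) * r ^ n)"
      unfolding CF_def
    proof (intro sum.cong refl)
      fix i assume "i \<in> {..n-b}"
      then have "b + (n - b) - i + 1 * i = n" using b by simp
      then show "real (n - b choose i) * q ^ (i + 1) * r ^ (b + (n - b) - i + 1 * i) / (1 - r ^ (i + 1)) =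
        real (n - b choose i) * (q ^ (i + 1) / (1 - r ^ (i + 1))) * r ^ n" by simp
    qed
    also have "\<dots> = (\<Sum>i\<le>n. real ((n - b) choose i) * (q ^ (i+1) / (1 - r ^ (i+1))) * r ^ n)"
      by (intro sum.mono_neutral_left) auto
    finally show ?thesis .
  qed
  have "CF 1 0 n - CF 1 b (n - b) = r ^ n * (\<Sum>i\<le>n. (real (n choose i) - real ((n-b) choose i)) * (q ^ (i+1) / (1 - r ^ (i+1))))"
    unfolding e1 e2 sum_subtractf[symmetric] sum_distrib_left by (intro sum.cong refl) (rule ring_aux1[symmetric])
  also have "\<dots> \<le> r ^ n * ((1/r) ^ b - 1)"
    using KEYfin[OF b] r_pos by (intro mult_left_mono) auto
  also have "\<dots> = r ^ (n - b) - r ^ n"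
  proof -
    have "r ^ n = r ^ (n - b) * r ^ b" using b by (simp add: power_add[symmetric])
    then show ?thesis using r_pos by (simp add: field_simps power_divide)
  qed
  finally show ?thesis .
qed

definition Gc :: real where "Gc = q * (1 - CF 1 0 n)"
definition Hf :: "nat \<Rightarrow> real" where "Hf a = 1 - CF 0 a (n - a)"
definition Hn :: "nat \<Rightarrow> real" where "Hn a = 1 - CF 1 a (n - a)"

lemma Hf_nonneg: "0 \<le> Hf a" using CF0_le1 by (simp add: Hf_def)

lemma BI:
  assumes "kk \<le> a" "a \<le> n"
  shows "q * (1 - r ^ kk + Hn (a - kk)) + (1 - q) * Hn a \<le> Gc + Hf a"
proof -
  define b where "b = a - kk"
  have bn: "b \<le> n" using assms by (simp add: b_def)
  have K: "CF 1 0 n - CF 1 b (n - b) \<le> r ^ (n - b) - r ^ n" by (rule KEY[OF bn])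
  have "r ^ (n - b) * (1 - r ^ b) \<le> r ^ (a - b) * (1 - r ^ b)"
    using assms r_pos r_lt1 by (intro mult_right_mono power_decreasing) (auto simp: b_def power_le_one)
  moreover have "r ^ (n - b) * (1 - r ^ b) = r ^ (n - b) - r ^ n"
  proof -
    have "r ^ (n - b) * r ^ b = r ^ n" using bn by (simp add: power_add[symmetric])
    then show ?thesis by (simp add: right_diff_distrib)
  qed
  moreover have "r ^ (a - b) * (1 - r ^ b) = r ^ (a - b) - r ^ a"
  proof -
    have "r ^ (a - b) * r ^ b = r ^ a" using assms unfolding b_def by (simp add: power_add[symmetric])
    then show ?thesis by (simp add: right_diff_distrib)
  qed
  moreover have akk: "a - b = kk" using assms unfolding b_def by simp
  ultimately have K2': "CF 1 0 n - CF 1 b (n - b) \<le> r ^ (a - b) - r ^ a" using K by linarith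
  have K2: "CF 1 0 n - CF 1 b (n - b) \<le> r ^ kk - r ^ a" using K2' akk by simp
  have K3: "q * CF 1 0 n - q * CF 1 b (n - b) \<le> q * r ^ kk - q * r ^ a"
    using mult_left_mono[OF K2, of q] q_pos by (simp add: right_diff_distrib)
  have rC: "r * CF 1 a (n - a) = CF 1 a (n - a) - q * CF 1 a (n - a)"
    unfolding r_def by (simp add: left_diff_distrib)
  have Hfa: "Hf a = 1 - q * r ^ a - r * CF 1 a (n - a)" by (simp add: Hf_def CF_shift)
  have "q * (1 - r ^ kk + Hn (a - kk)) + (1 - q) * Hn a
      = q - q * r ^ kk + q - q * CF 1 b (n - b) + 1 - CF 1 a (n - a) - q + q * CF 1 a (n - a)"
    unfolding Hn_def b_def by (simp add: algebra_simps)
  moreover have "Gc + Hf a = q - q * CF 1 0 n + 1 - q * r ^ a - (CF 1 a (n - a) - q * CF 1 a (n - a))"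
    unfolding Gc_def Hfa rC by (simp add: algebra_simps)
  ultimately show ?thesis using K3 by linarith
qed

lemma BI1:
  assumes "kk \<le> n"
  shows "1 - r ^ kk + Hn (n - kk) \<le> 1 - r ^ n + Hn 0"
  using KEY[of "n - kk"] assms by (simp add: Hn_def)

end

context nn
begin

definition L :: real where "L = ln (1 / r)"

lemma L_eq: "L = - ln r" using r_pos by (simp add: L_def ln_div)
lemma q_le_L: "q \<le> L"
  using ln_le_minus_one[OF r_pos] unfolding L_eq r_def by simp
lemma L_pos: "0 < L" using q_le_L q_pos by simp
lemma exp_L: "exp L = 1 / r" using r_pos by (simp add: L_def)
lemma exp_mL: "exp (- L) = r" using r_pos by (simp add: L_eq)
lemma k_ge1: "1 \<le> real n * L"
proof -
  have "real n * q \<le> real n * L" using q_le_L by (intro mult_left_mono) auto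
  then show ?thesis using nq by simp
qed

lemma chord1:
  assumes "0 \<le> s" "s \<le> 1"
  shows "exp (- (s * L)) \<le> 1 - q * s"
proof -
  have "exp (s * (- L)) \<le> 1 - s + s * exp (- L)" by (rule exp_chord[OF assms])
  then show ?thesis unfolding exp_mL r_def by (simp add: algebra_simps)
qed

lemma chord2:
  assumes "0 \<le> x" "x \<le> 1"
  shows "r * (exp (L * x) - 1) \<le> L * x"
proof -
  have "exp (x * L) \<le> 1 - x + x * exp L" by (rule exp_chord[OF assms])
  then have "r * exp (L * x) \<le> r * (1 - x + x * (1 / r))" using r_pos unfolding exp_L
    by (simp add: mult.commute)
  also have "\<dots> = r - r * x + x" using r_pos by (simp add: algebra_simps)
  finally have "r * (exp (L * x) - 1) \<le> q * x" unfolding r_def by (simp add: algebra_simps)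
  also have "\<dots> \<le> L * x" using q_le_L assms by (intro mult_right_mono) auto
  finally show ?thesis .
qed

definition FF :: "real \<Rightarrow> real" where "FF x = exp (- (real n * L) * (1 - x))"

lemma term_lower:
  "r / (real n * L) * (FF (r ^ j) - FF (r ^ Suc j)) \<le> q * r ^ j * r ^ 0 * (r + q * r ^ (j + 1)) ^ n"
proof -
  define x where "x = r ^ j"
  define k where "k = real n * L"
  have k1: "1 \<le> k" using k_ge1 by (simp add: k_def)
  have x0: "0 < x" and x1: "x \<le> 1" using r_pos r_lt1 by (auto simp: x_def power_le_one)
  have rx0: "0 \<le> r * x" and rx1: "r * x \<le> 1" using x0 x1 r_pos r_lt1 by (auto simp: mult_le_one)
  define s where "s = 1 - r * x"
  have s0: "0 \<le> s" and s1: "s \<le> 1" using rx0 rx1 by (auto simp: s_def)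
  have ybase: "r + q * r ^ (j + 1) = 1 - q * s" unfolding s_def x_def r_def by (simp add: algebra_simps)
  have c1: "exp (- (s * L)) \<le> r + q * r ^ (j + 1)" using chord1[OF s0 s1] ybase by simp
  have "exp (- (s * L)) ^ n \<le> (r + q * r ^ (j + 1)) ^ n"
    by (intro power_mono c1) auto
  moreover have "exp (- (s * L)) ^ n = FF (r * x)"
    unfolding FF_def s_def exp_of_nat_mult[symmetric] by (simp add: algebra_simps)
  ultimately have P: "FF (r * x) \<le> (r + q * r ^ (j + 1)) ^ n" by simp
  have "FF x = FF (r * x) * exp (L * x)"
  proof -
    have "- k * (1 - x) = - k * (1 - r * x) + k * q * x" unfolding r_def by (simp add: algebra_simps)
    moreover have "k * q = L" unfolding k_def using nq by (simp add: algebra_simps)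
    ultimately have "- k * (1 - x) = - k * (1 - r * x) + L * x" by (simp add: mult.assoc)
    then show ?thesis unfolding FF_def k_def[symmetric] by (simp add: mult_exp_exp algebra_simps)
  qed
  then have dd: "FF x - FF (r * x) = FF (r * x) * (exp (L * x) - 1)" by (simp add: algebra_simps)
  have "r / k * (FF x - FF (r * x)) = FF (r * x) * (r * (exp (L * x) - 1)) / k"
    unfolding dd by (simp add: mult_ac)
  also have "\<dots> \<le> FF (r * x) * (L * x) / k"
    using chord2[OF _ x1] x0 k1 by (intro divide_right_mono mult_left_mono) (auto simp: FF_def)
  also have "\<dots> = FF (r * x) * q * x"
  proof -
    have Lk: "L * x / k = q * x" unfolding k_def q_def using L_pos n2 by (simp add: field_simps)
    have "FF (r * x) * (L * x) / k = FF (r * x) * (L * x / k)" by simp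
    then show ?thesis unfolding Lk by (simp add: mult.assoc)
  qed
  also have "\<dots> \<le> q * x * (r + q * r ^ (j + 1)) ^ n"
    using P q_pos x0 by (simp add: mult.commute mult.left_commute mult_left_mono)
  finally have "r / k * (FF x - FF (r * x)) \<le> q * x * (r + q * r ^ (j + 1)) ^ n" .
  moreover have "r ^ Suc j = r * x" by (simp add: x_def)
  ultimately show ?thesis unfolding k_def x_def
    by (simp add: algebra_simps)
qed

lemma S_lower: "r * (1 - exp (- (real n * L))) / (real n * L) \<le> CF 1 0 n"
proof -
  define k where "k = real n * L"
  have k1: "1 \<le> k" using k_ge1 by (simp add: k_def)
  let ?t = "\<lambda>j. q * r ^ j * r ^ 0 * (r + q * r ^ (j + 1)) ^ n"
  have ts: "?t sums CF 1 0 n" by (rule sums_CF)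
  have t0: "0 \<le> ?t j" for j using q_pos r_pos by simp
  have bnd: "r / k * (1 - FF (r ^ J)) \<le> CF 1 0 n" for J
  proof -
    have "(\<Sum>j<J. r / k * (FF (r ^ j) - FF (r ^ Suc j))) = r / k * (\<Sum>j<J. FF (r ^ j) - FF (r ^ Suc j))"
      by (simp add: sum_distrib_left)
    also have "\<dots> = r / k * (FF (r ^ 0) - FF (r ^ J))"
      by (simp only: sum_lessThan_telescope'[of "\<lambda>j. FF (r ^ j)"])
    also have "FF (r ^ 0) = 1" by (simp add: FF_def)
    finally have "r / k * (1 - FF (r ^ J)) = (\<Sum>j<J. r / k * (FF (r ^ j) - FF (r ^ Suc j)))" by simp
    also have "\<dots> \<le> (\<Sum>j<J. ?t j)"
      by (intro sum_mono) (use term_lower in \<open>simp add: k_def\<close>)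
    also have "\<dots> \<le> suminf ?t"
      using ts t0 by (intro sum_le_suminf) (auto simp: sums_iff)
    also have "\<dots> = CF 1 0 n" using ts by (simp add: sums_iff)
    finally show ?thesis .
  qed
  have "(\<lambda>J. r / k * (1 - FF (r ^ J))) \<longlonglongrightarrow> r / k * (1 - exp (- k * (1 - 0)))"
    unfolding FF_def k_def[symmetric]
    using r_pos r_lt1 by (intro tendsto_intros LIMSEQ_power_zero) auto
  then have "r / k * (1 - exp (- k * (1 - 0))) \<le> CF 1 0 n"
    using bnd by (intro LIMSEQ_le_const2) auto
  then show ?thesis by (simp add: k_def)
qed

lemma FINAL:
  "1 - r ^ n + (real n + 1) * (1 - CF 1 0 n)
   \<le> (1 + q - (q * (1 - q)) / (ln (1 / (1 - q)) * (1 + q)) * (1 - exp (-1))) * (real n + 1)"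
proof -
  define W where "W = r * (1 - exp (-1)) / L"
  have W0: "0 \<le> W" using r_pos L_pos by (simp add: W_def)
  have qn: "q * (real n + 1) = 1 + q" using nq by (simp add: algebra_simps)
  have Lr: "ln (1 / (1 - q)) = L" by (simp add: L_def r_def)
  have cW: "(q * (1 - q)) / (ln (1 / (1 - q)) * (1 + q)) * (1 - exp (-1)) * (real n + 1) = W"
  proof -
    have "(q * (1 - q)) / (ln (1 / (1 - q)) * (1 + q)) * (1 - exp (-1)) * (real n + 1)
        = (q * (real n + 1)) * r * (1 - exp (-1)) / (L * (1 + q))"
      unfolding Lr r_def by (simp add: field_simps)
    also have "\<dots> = ((1 + q) * (r * (1 - exp (-1)))) / ((1 + q) * L)" unfolding qn by (simp add: mult_ac)
    also have "\<dots> = W" unfolding W_def using q_pos by (intro mult_divide_mult_cancel_left) auto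
    finally show ?thesis .
  qed
  have k1: "1 \<le> real n * L" by (rule k_ge1)
  have "exp (- (real n * L)) \<le> exp (-1)" using k1 by simp
  then have "r * (1 - exp (-1)) / (real n * L) \<le> r * (1 - exp (- (real n * L))) / (real n * L)"
    using r_pos k1 by (intro divide_right_mono mult_left_mono) auto
  also have "\<dots> \<le> CF 1 0 n" by (rule S_lower)
  finally have S1: "W / real n \<le> CF 1 0 n" unfolding W_def using n2 by (simp add: field_simps)
  have "W \<le> (real n + 1) * (W / real n)" using W0 n2 by (simp add: field_simps)
  also have "\<dots> \<le> (real n + 1) * CF 1 0 n" using S1 by (intro mult_left_mono) auto
  finally have S2: "W \<le> (real n + 1) * CF 1 0 n" .
  have rn: "0 \<le> r ^ n" using r_pos by simp
  have cc: "(1 + q - (q * (1 - q)) / (ln (1 / (1 - q)) * (1 + q)) * (1 - exp (-1))) * (real n + 1)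
      = (1 + q) * (real n + 1) - W"
    by (simp only: left_diff_distrib cW)
  have e1: "(real n + 1) * (1 - CF 1 0 n) = (real n + 1) - (real n + 1) * CF 1 0 n"
    by (simp add: right_diff_distrib)
  have e2: "(1 + q) * (real n + 1) = (real n + 1) + q * (real n + 1)"
    by (simp add: distrib_right)
  show ?thesis unfolding cc e1 e2 using S2 rn q_pos qn by linarith
qed

end

lemma ex_bind:
  fixes f :: "'b \<Rightarrow> real"
  assumes bnd: "\<And>x y. x \<in> set_pmf M \<Longrightarrow> y \<in> set_pmf (N x) \<Longrightarrow> \<bar>f y\<bar> \<le> B"
  shows "measure_pmf.expectation (bind_pmf M N) f = measure_pmf.expectation M (\<lambda>x. measure_pmf.expectation (N x) f)"
proof -
  define f' where "f' y = max (-B) (min B (f y))" for y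
  have eqf: "f' y = f y" if "x \<in> set_pmf M" "y \<in> set_pmf (N x)" for x y
    using bnd[OF that] by (auto simp: f'_def)
  have bf': "\<bar>f' y\<bar> \<le> \<bar>B\<bar>" for y by (auto simp: f'_def)
  have "measure_pmf.expectation (bind_pmf M N) f = measure_pmf.expectation (bind_pmf M N) f'"
    by (intro integral_cong_AE) (auto intro!: AE_pmfI simp: eqf)
  also have "\<dots> = (\<integral>x. measure_pmf.expectation (N x) f' \<partial>measure_pmf M)"
    unfolding measure_pmf_bind
  proof (rule integral_bind[where K = "count_space UNIV" and B = "\<bar>B\<bar>" and B' = 1])
    show "f' \<in> borel_measurable (count_space UNIV)" by simp
    show "\<bar>f' x\<bar> \<le> \<bar>B\<bar>" for x by (rule bf')
    show "(\<lambda>x. measure_pmf (N x)) \<in> measurable (measure_pmf M) (subprob_algebra (count_space UNIV))"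
      by (auto simp: measure_pmf_in_subprob_algebra)
    show "finite_measure (measure_pmf M)" by (rule measure_pmf.finite_measure_axioms)
    show "AE x in measure_pmf M. emeasure (measure_pmf (N x)) (space (measure_pmf (N x))) \<le> ennreal 1"
      by (auto simp: measure_pmf.emeasure_space_1)
  qed
  also have "\<dots> = measure_pmf.expectation M (\<lambda>x. measure_pmf.expectation (N x) f)"
    by (intro integral_cong_AE AE_pmfI integral_cong_AE) (auto intro!: AE_pmfI simp: eqf)
  finally show ?thesis .
qed

lemma integrable_pmf_bounded:
  fixes f :: "'a \<Rightarrow> real"
  assumes "\<And>x. x \<in> set_pmf M \<Longrightarrow> \<bar>f x\<bar> \<le> B"
  shows "integrable (measure_pmf M) f"
  by (rule measure_pmf.integrable_const_bound[where B = B]) (use assms in \<open>auto intro!: AE_pmfI\<close>)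

lemma ex_swap:
  fixes f :: "'a \<Rightarrow> 'b \<Rightarrow> real"
  assumes bnd: "\<And>x y. x \<in> set_pmf M \<Longrightarrow> y \<in> set_pmf N \<Longrightarrow> \<bar>f x y\<bar> \<le> B"
  shows "measure_pmf.expectation M (\<lambda>x. measure_pmf.expectation N (\<lambda>y. f x y))
       = measure_pmf.expectation N (\<lambda>y. measure_pmf.expectation M (\<lambda>x. f x y))"
proof -
  let ?P = "bind_pmf M (\<lambda>x. bind_pmf N (\<lambda>y. return_pmf (x, y)))"
  let ?Q = "bind_pmf N (\<lambda>y. bind_pmf M (\<lambda>x. return_pmf (x, y)))"
  have PQ: "?P = ?Q" by (rule bind_commute_pmf)
  have "measure_pmf.expectation ?P (case_prod f) = measure_pmf.expectation M (\<lambda>x. measure_pmf.expectation N (\<lambda>y. f x y))"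
  proof -
    have "measure_pmf.expectation ?P (case_prod f) = measure_pmf.expectation M (\<lambda>x. measure_pmf.expectation (bind_pmf N (\<lambda>y. return_pmf (x, y))) (case_prod f))"
      by (rule ex_bind[where B = B]) (auto intro: bnd)
    also have "\<dots> = measure_pmf.expectation M (\<lambda>x. measure_pmf.expectation N (\<lambda>y. measure_pmf.expectation (return_pmf (x, y)) (case_prod f)))"
      by (intro integral_cong_AE AE_pmfI ex_bind[where B = B]) (auto intro: bnd)
    also have "\<dots> = measure_pmf.expectation M (\<lambda>x. measure_pmf.expectation N (\<lambda>y. f x y))"
      by simp
    finally show ?thesis .
  qed
  moreover have "measure_pmf.expectation ?Q (case_prod f) = measure_pmf.expectation N (\<lambda>y. measure_pmf.expectation M (\<lambda>x. f x y))"
  proof -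
    have "measure_pmf.expectation ?Q (case_prod f) = measure_pmf.expectation N (\<lambda>y. measure_pmf.expectation (bind_pmf M (\<lambda>x. return_pmf (x, y))) (case_prod f))"
      by (rule ex_bind[where B = B]) (auto intro: bnd)
    also have "\<dots> = measure_pmf.expectation N (\<lambda>y. measure_pmf.expectation M (\<lambda>x. measure_pmf.expectation (return_pmf (x, y)) (case_prod f)))"
      by (intro integral_cong_AE AE_pmfI ex_bind[where B = B]) (auto intro: bnd)
    also have "\<dots> = measure_pmf.expectation N (\<lambda>y. measure_pmf.expectation M (\<lambda>x. f x y))"
      by simp
    finally show ?thesis .
  qed
  ultimately show ?thesis using PQ by simp
qed


lemma run_range: "x \<in> set_pmf (run V S lam p g pol k t ret h) \<Longrightarrow> 0 \<le> x \<and> x \<le> real k"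
proof (induction k arbitrary: t ret h x)
  case 0 then show ?case by simp
next
  case (Suc k)
  show ?case using Suc.prems
    by (auto simp: Let_def split: option.splits if_splits dest!: Suc.IH)
qed

locale vol = nn +
  fixes g :: "nat pmf" and pol :: policy
  assumes gpmf: "\<And>\<tau>. 1 \<le> \<tau> \<Longrightarrow> pmf g \<tau> = 1 / real n * (1 - 1 / real n) ^ (\<tau> - 1)"
begin

lemma gq: "1 \<le> \<tau> \<Longrightarrow> pmf g \<tau> = q * r ^ (\<tau> - 1)"
  using gpmf by (simp add: q_def r_def)

lemma geo_sum: "(\<Sum>\<tau>\<in>{1..J}. q * r ^ (\<tau> - 1)) = 1 - r ^ J"
proof (induction J)
  case 0 then show ?case by simp
next
  case (Suc J)
  have "(\<Sum>\<tau>\<in>{1..Suc J}. q * r ^ (\<tau> - 1)) = (\<Sum>\<tau>\<in>{1..J}. q * r ^ (\<tau> - 1)) + q * r ^ J"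
    by (simp add: sum.atLeast_Suc_atMost_Suc_shift)
  also have "\<dots> = 1 - r ^ Suc J" using Suc unfolding r_def by (simp add: algebra_simps)
  finally show ?case .
qed

lemma g0: "pmf g 0 = 0"
proof -
  have le: "pmf g 0 \<le> r ^ J" for J
  proof -
    have "(\<Sum>\<tau>\<in>{0..J}. pmf g \<tau>) = pmf g 0 + (\<Sum>\<tau>\<in>{Suc 0..J}. pmf g \<tau>)"
      by (rule sum.atLeast_Suc_atMost) simp
    then have "pmf g 0 + (\<Sum>\<tau>\<in>{1..J}. pmf g \<tau>) = (\<Sum>\<tau>\<in>{0..J}. pmf g \<tau>)" by simp
    also have "\<dots> = measure_pmf.prob g {0..J}" by (simp add: measure_measure_pmf_finite)
    also have "\<dots> \<le> 1" by simp
    finally have "pmf g 0 + (\<Sum>\<tau>\<in>{1..J}. pmf g \<tau>) \<le> 1" .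
    moreover have "(\<Sum>\<tau>\<in>{1..J}. pmf g \<tau>) = 1 - r ^ J"
      using geo_sum[of J] by (simp add: gq)
    ultimately show ?thesis by simp
  qed
  have "(\<lambda>J. r ^ J) \<longlonglongrightarrow> 0" using r_pos r_lt1 by (intro LIMSEQ_power_zero) auto
  then have "pmf g 0 \<le> 0" using le by (intro LIMSEQ_le_const) auto
  then show ?thesis using pmf_nonneg[of g 0] by simp
qed

lemma set_g: "x \<in> set_pmf g \<Longrightarrow> 1 \<le> x"
  using g0 by (cases x) (auto simp: set_pmf_eq)

abbreviation lamf :: "nat \<Rightarrow> nat \<Rightarrow> real" where "lamf \<equiv> (\<lambda>s t. if t = 1 then 1 else q)"

definition R :: "nat \<Rightarrow> nat \<Rightarrow> (nat \<Rightarrow> nat) \<Rightarrow> history \<Rightarrow> real pmf" where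
  "R k t ret h = run n 1 lamf (\<lambda>v s. q) g pol k t ret h"

definition val :: "nat \<Rightarrow> nat \<Rightarrow> (nat \<Rightarrow> nat) \<Rightarrow> history \<Rightarrow> real" where
  "val k t ret h = measure_pmf.expectation (R k t ret h) (\<lambda>x. x)"

lemma R_range: "x \<in> set_pmf (R k t ret h) \<Longrightarrow> 0 \<le> x \<and> x \<le> real k"
  unfolding R_def by (rule run_range)

lemma val_range: "0 \<le> val k t ret h \<and> val k t ret h \<le> real k"
proof -
  have "0 \<le> val k t ret h" unfolding val_def
    by (intro integral_nonneg_AE AE_pmfI) (use R_range in blast)
  moreover have "val k t ret h \<le> measure_pmf.expectation (R k t ret h) (\<lambda>x. real k)" unfolding val_def
    by (intro integral_mono_AE AE_pmfI integrable_pmf_bounded[where B = "real k"])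
       (use R_range in force)+
  ultimately show ?thesis by simp
qed

lemma arrival_eq:
  "arrival_pmf 1 lamf t = map_pmf (\<lambda>b. if b then Some 1 else None) (bernoulli_pmf (lamf 1 t))"
proof -
  let ?f = "\<lambda>a. case a of None \<Rightarrow> 1 - (\<Sum>s\<in>{1..1::nat}. lamf s t)
       | Some s \<Rightarrow> (if s \<in> {1..1} then lamf s t else 0)"
  have l01: "0 \<le> lamf 1 t" "lamf 1 t \<le> 1" using q_pos q_lt1 by auto
  have nn: "0 \<le> ?f a" for a using l01 by (auto split: option.splits)
  have pr: "(\<integral>\<^sup>+a. ennreal (?f a) \<partial>count_space UNIV) = 1"
  proof -
    have "(\<integral>\<^sup>+a. ennreal (?f a) \<partial>count_space UNIV) = (\<Sum>a\<in>{None, Some 1}. ennreal (?f a))"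
      by (intro nn_integral_count_space') (auto split: option.splits)
    also have "\<dots> = 1" using l01 by (simp add: ennreal_plus[symmetric] del: ennreal_plus)
    finally show ?thesis .
  qed
  show ?thesis
  proof (rule pmf_eqI)
    fix a :: "nat option"
    have "pmf (arrival_pmf 1 lamf t) a = ?f a"
      unfolding arrival_pmf_def by (rule pmf_embed_pmf[OF nn pr])
    moreover have "pmf (map_pmf (\<lambda>b. if b then Some 1 else None) (bernoulli_pmf (lamf 1 t))) a = ?f a"
    proof -
      have e1: "{x. x} = {True}" "Collect Not = {False}" by auto
      show ?thesis using l01 by (cases a) (auto simp: pmf_map vimage_def measure_pmf_single e1 split: if_splits)
    qed
    ultimately show "pmf (arrival_pmf 1 lamf t) a = pmf (map_pmf (\<lambda>b. if b then Some 1 else None) (bernoulli_pmf (lamf 1 t))) a"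
      by simp
  qed
qed

lemma ex_map_add:
  fixes M :: "real pmf"
  assumes "\<And>x. x \<in> set_pmf M \<Longrightarrow> \<bar>x\<bar> \<le> B"
  shows "measure_pmf.expectation (map_pmf (\<lambda>x. c + x) M) (\<lambda>x. x) = c + measure_pmf.expectation M (\<lambda>x. x)"
proof -
  have "measure_pmf.expectation (map_pmf (\<lambda>x. c + x) M) (\<lambda>x. x) = measure_pmf.expectation M (\<lambda>x. c + x)"
    by simp
  also have "\<dots> = measure_pmf.expectation M (\<lambda>x. c) + measure_pmf.expectation M (\<lambda>x. x)"
    by (intro Bochner_Integration.integral_add) (auto intro: integrable_pmf_bounded[where B = B] assms)
  also have "\<dots> = c + measure_pmf.expectation M (\<lambda>x. x)" by simp
  finally show ?thesis .
qed

definition SV :: "nat \<Rightarrow> nat \<Rightarrow> (nat \<Rightarrow> nat) \<Rightarrow> history \<Rightarrow> real" where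
  "SV k t ret h = (let N = pol h 1 \<inter> {1..n}; A = {v \<in> N. ret v \<le> t} in
     measure_pmf.expectation (Pi_pmf A False (\<lambda>v. bernoulli_pmf q)) (\<lambda>rr.
       measure_pmf.expectation (Pi_pmf A 0 (\<lambda>v. g)) (\<lambda>z.
         (if {v \<in> A. rr v} = {} then 0 else 1) +
         val k (Suc t) (\<lambda>v. if v \<in> A then t + z v else ret v) (h @ [Some (1, N, {v \<in> A. rr v})]))))"

lemma VAL: "val (Suc k) t ret h = lamf 1 t * SV k t ret h + (1 - lamf 1 t) * val k (Suc t) ret (h @ [None])"
proof -
  define F where "F = (\<lambda>a. case a of None \<Rightarrow> run n 1 lamf (\<lambda>v s. q) g pol k (Suc t) ret (h @ [None])
      | Some s \<Rightarrow>
          (let N = pol h s \<inter> {1..n};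
               A = {v \<in> N. ret v \<le> t}
           in bind_pmf (Pi_pmf A False (\<lambda>v. bernoulli_pmf ((\<lambda>v s. q) v s))) (\<lambda>r.
              bind_pmf (Pi_pmf A 0 (\<lambda>v. g)) (\<lambda>z.
                let P = {v \<in> A. r v};
                    ret' = (\<lambda>v. if v \<in> A then t + z v else ret v)
                in map_pmf (\<lambda>x. (if P = {} then 0 else 1) + x)
                     (run n 1 lamf (\<lambda>v s. q) g pol k (Suc t) ret' (h @ [Some (s, N, P)]))))))"
  have l01: "0 \<le> lamf 1 t" "lamf 1 t \<le> 1" using q_pos q_lt1 by auto
  have RS: "R (Suc k) t ret h = bind_pmf (arrival_pmf 1 lamf t) F"
    unfolding R_def F_def by (simp only: run.simps)
  have bF: "\<bar>y\<bar> \<le> real (Suc k)" if "a \<in> set_pmf (arrival_pmf 1 lamf t)" "y \<in> set_pmf (F a)" for a y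
  proof -
    have "y \<in> set_pmf (R (Suc k) t ret h)" using that unfolding RS by auto
    then show ?thesis using R_range by fastforce
  qed
  have "val (Suc k) t ret h = measure_pmf.expectation (bind_pmf (bernoulli_pmf (lamf 1 t)) (\<lambda>b. F (if b then Some 1 else None))) (\<lambda>x. x)"
    unfolding val_def RS arrival_eq by (simp add: bind_map_pmf)
  also have "\<dots> = measure_pmf.expectation (bernoulli_pmf (lamf 1 t)) (\<lambda>b. measure_pmf.expectation (F (if b then Some 1 else None)) (\<lambda>x. x))"
  proof (rule ex_bind[where B = "real (Suc k)"])
    fix b y assume b: "b \<in> set_pmf (bernoulli_pmf (lamf 1 t))" and y: "y \<in> set_pmf (F (if b then Some 1 else None))"
    have "(if b then Some 1 else None) \<in> set_pmf (arrival_pmf 1 lamf t)"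
      unfolding arrival_eq set_map_pmf using b by blast
    then show "\<bar>y\<bar> \<le> real (Suc k)" by (rule bF) (rule y)
  qed
  also have "\<dots> = lamf 1 t * measure_pmf.expectation (F (Some 1)) (\<lambda>x. x) + (1 - lamf 1 t) * measure_pmf.expectation (F None) (\<lambda>x. x)"
    using l01 by (subst integral_bernoulli_pmf) (auto simp: mult.commute)
  also have "measure_pmf.expectation (F None) (\<lambda>x. x) = val k (Suc t) ret (h @ [None])"
    unfolding F_def val_def R_def by simp
  also have "measure_pmf.expectation (F (Some 1)) (\<lambda>x. x) = SV k t ret h"
  proof -
    define N where "N = pol h 1 \<inter> {1..n}"
    define A where "A = {v \<in> N. ret v \<le> t}"
    define c where "c = (\<lambda>rr. if {v \<in> A. rr v} = {} then 0 else (1::real))"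
    define RR where "RR = (\<lambda>rr z. R k (Suc t) (\<lambda>v. if v \<in> A then t + z v else ret v) (h @ [Some (1, N, {v \<in> A. rr v})]))"
    have FS: "F (Some 1) = bind_pmf (Pi_pmf A False (\<lambda>v. bernoulli_pmf q)) (\<lambda>rr. bind_pmf (Pi_pmf A 0 (\<lambda>v. g))
        (\<lambda>z. map_pmf (\<lambda>x. c rr + x) (RR rr z)))"
      unfolding F_def N_def A_def c_def RR_def R_def by (simp only: option.case Let_def)
    have c01: "0 \<le> c rr" "c rr \<le> 1" for rr by (auto simp: c_def)
    have bRR: "\<bar>x\<bar> \<le> real k" if "x \<in> set_pmf (RR rr z)" for rr z x
      using R_range[of x] that unfolding RR_def by fastforce
    have bM: "\<bar>y\<bar> \<le> real (Suc k)" if "y \<in> set_pmf (map_pmf (\<lambda>x. c rr + x) (RR rr z))" for rr z y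
    proof -
      from that obtain x where x: "x \<in> set_pmf (RR rr z)" "y = c rr + x" by auto
      show ?thesis using bRR[OF x(1)] c01[of rr] x(2) by (auto simp: abs_le_iff)
    qed
    have bM2: "\<bar>c rr + xa\<bar> \<le> 1 + real k" if "xa \<in> set_pmf (RR rr z)" for rr z xa
      using bRR[OF that] c01[of rr] by (auto simp: abs_le_iff)
    have "measure_pmf.expectation (F (Some 1)) (\<lambda>x. x) = measure_pmf.expectation (Pi_pmf A False (\<lambda>v. bernoulli_pmf q))
        (\<lambda>rr. measure_pmf.expectation (bind_pmf (Pi_pmf A 0 (\<lambda>v. g)) (\<lambda>z. map_pmf (\<lambda>x. c rr + x) (RR rr z))) (\<lambda>x. x))"
      unfolding FS by (rule ex_bind[where B = "real (Suc k)"]) (use bM2 in force)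
    also have "\<dots> = measure_pmf.expectation (Pi_pmf A False (\<lambda>v. bernoulli_pmf q))
        (\<lambda>rr. measure_pmf.expectation (Pi_pmf A 0 (\<lambda>v. g)) (\<lambda>z. measure_pmf.expectation (map_pmf (\<lambda>x. c rr + x) (RR rr z)) (\<lambda>x. x)))"
      by (intro integral_cong_AE AE_pmfI ex_bind[where B = "real (Suc k)"]) (use bM2 in force)+
    also have "\<dots> = measure_pmf.expectation (Pi_pmf A False (\<lambda>v. bernoulli_pmf q))
        (\<lambda>rr. measure_pmf.expectation (Pi_pmf A 0 (\<lambda>v. g)) (\<lambda>z. c rr + measure_pmf.expectation (RR rr z) (\<lambda>x. x)))"
      by (intro integral_cong_AE AE_pmfI refl ex_map_add[where B = "real k"] bRR) auto
    also have "\<dots> = SV k t ret h"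
      unfolding SV_def Let_def N_def[symmetric] A_def[symmetric] c_def RR_def val_def by simp
    finally show ?thesis .
  qed
  finally show ?thesis .
qed

end

context vol
begin

definition mu :: "nat \<Rightarrow> (nat \<Rightarrow> bool) \<Rightarrow> (nat \<Rightarrow> nat) \<Rightarrow> (nat \<Rightarrow> nat) pmf" where
  "mu t \<beta> c = Pi_pmf {1..n} 0 (\<lambda>v. if \<beta> v then return_pmf (c v) else map_pmf ((+) t) g)"

definition rho :: "(nat \<Rightarrow> bool) \<Rightarrow> (nat \<Rightarrow> bool) pmf" where
  "rho \<beta> = Pi_pmf {1..n} False (\<lambda>v. if \<beta> v then return_pmf True else bernoulli_pmf q)"

lemma pmf_map_plus: "pmf (map_pmf ((+) t) g) x = (if t \<le> x then pmf g (x - t) else 0)"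
proof (cases "t \<le> x")
  case True
  then have "x = t + (x - t)" by simp
  then have "pmf (map_pmf ((+) t) g) x = pmf (map_pmf ((+) t) g) (t + (x - t))" by simp
  also have "\<dots> = pmf g (x - t)" by (rule pmf_map_inj') (simp add: inj_on_def)
  finally show ?thesis using True by simp
next
  case False
  then have "x \<notin> set_pmf (map_pmf ((+) t) g)" by auto
  then show ?thesis using False by (simp add: set_pmf_eq)
qed

lemma MEMO: "map_pmf ((+) t) g = bind_pmf (bernoulli_pmf q) (\<lambda>b. if b then return_pmf (Suc t) else map_pmf ((+) (Suc t)) g)"
proof (rule pmf_eqI)
  fix x
  have "pmf (bind_pmf (bernoulli_pmf q) (\<lambda>b. if b then return_pmf (Suc t) else map_pmf ((+) (Suc t)) g)) x
      = q * pmf (return_pmf (Suc t)) x + (1 - q) * pmf (map_pmf ((+) (Suc t)) g) x"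
    unfolding pmf_bind using q_pos q_lt1 by (subst integral_bernoulli_pmf) (auto simp: mult.commute)
  also have "\<dots> = pmf (map_pmf ((+) t) g) x"
  proof (cases "x \<le> t")
    case True
    then show ?thesis by (auto simp: pmf_map_plus g0 indicator_def)
  next
    case False
    then obtain m where m: "x = Suc t + m" by (metis add_Suc less_imp_Suc_add not_le)
    show ?thesis
    proof (cases m)
      case 0 then show ?thesis using m by (simp add: pmf_map_plus g0 gq)
    next
      case (Suc m')
      have "pmf (map_pmf ((+) t) g) x = q * r ^ (Suc m' + 1 - 1)" using m Suc by (simp add: pmf_map_plus gq)
      moreover have "pmf (map_pmf ((+) (Suc t)) g) x = q * r ^ m'" using m Suc by (simp add: pmf_map_plus gq)
      ultimately show ?thesis using m Suc by (simp add: r_def indicator_def)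
    qed
  qed
  finally show "pmf (map_pmf ((+) t) g) x = pmf (bind_pmf (bernoulli_pmf q) (\<lambda>b. if b then return_pmf (Suc t) else map_pmf ((+) (Suc t)) g)) x" ..
qed

lemma DEC: "mu t \<beta> c = bind_pmf (rho \<beta>) (\<lambda>\<beta>'. mu (Suc t) \<beta>' (\<lambda>v. if \<beta> v then c v else Suc t))"
proof -
  let ?c' = "\<lambda>v. if \<beta> v then c v else Suc t"
  let ?P = "\<lambda>v. if \<beta> v then return_pmf True else bernoulli_pmf q"
  let ?Q = "\<lambda>v b. if b then return_pmf (?c' v) else map_pmf ((+) (Suc t)) g"
  have "mu t \<beta> c = Pi_pmf {1..n} 0 (\<lambda>v. bind_pmf (?P v) (?Q v))"
    unfolding mu_def by (intro Pi_pmf_cong refl) (auto simp: MEMO bind_return_pmf)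
  also have "\<dots> = bind_pmf (Pi_pmf {1..n} False ?P) (\<lambda>f. Pi_pmf {1..n} 0 (\<lambda>v. ?Q v (f v)))"
    by (rule Pi_pmf_bind) simp
  also have "\<dots> = bind_pmf (rho \<beta>) (\<lambda>\<beta>'. mu (Suc t) \<beta>' ?c')"
    unfolding rho_def mu_def by simp
  finally show ?thesis .
qed

lemma mu_support:
  assumes "ret \<in> set_pmf (mu t \<beta> c)"
  shows "\<And>v. v \<notin> {1..n} \<Longrightarrow> ret v = 0"
    and "\<And>v. v \<in> {1..n} \<Longrightarrow> \<beta> v \<Longrightarrow> ret v = c v"
    and "\<And>v. v \<in> {1..n} \<Longrightarrow> \<not> \<beta> v \<Longrightarrow> t < ret v"
  using assms set_g unfolding mu_def set_Pi_pmf[OF finite_atLeastAtMost] PiE_dflt_def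
  by (fastforce split: if_splits)+

lemma rho_finite: "finite (set_pmf (rho \<beta>))"
  unfolding rho_def set_Pi_pmf[OF finite_atLeastAtMost] by (intro finite_PiE_dflt) auto

lemma UPD:
  assumes K: "K \<subseteq> {1..n}" "\<And>v. v \<in> K \<Longrightarrow> \<beta> v"
  shows "bind_pmf (mu t \<beta> c) (\<lambda>ret. map_pmf (\<lambda>z v. if v \<in> K then t + z v else ret v) (Pi_pmf K 0 (\<lambda>v. g)))
       = mu t (\<lambda>v. \<beta> v \<and> v \<notin> K) c"
proof -
  let ?D = "{1..n::nat}"
  let ?P = "\<lambda>v. if \<beta> v then return_pmf (c v) else map_pmf ((+) t) g"
  let ?Q = "\<lambda>v x. if v \<in> K then map_pmf ((+) t) g else return_pmf x"
  have "mu t (\<lambda>v. \<beta> v \<and> v \<notin> K) c = Pi_pmf ?D 0 (\<lambda>v. bind_pmf (?P v) (?Q v))"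
    unfolding mu_def
  proof (intro Pi_pmf_cong refl)
    fix v assume "v \<in> {1..n}"
    show "(if \<beta> v \<and> v \<notin> K then return_pmf (c v) else map_pmf ((+) t) g) = bind_pmf (?P v) (?Q v)"
      using K(2)[of v] by (cases "v \<in> K") (auto simp: bind_return_pmf bind_return_pmf')
  qed
  also have "\<dots> = bind_pmf (mu t \<beta> c) (\<lambda>ret. Pi_pmf ?D 0 (\<lambda>v. ?Q v (ret v)))"
    unfolding mu_def by (rule Pi_pmf_bind) simp
  also have "\<dots> = bind_pmf (mu t \<beta> c) (\<lambda>ret. map_pmf (\<lambda>z v. if v \<in> K then t + z v else ret v) (Pi_pmf K 0 (\<lambda>v. g)))"
  proof (rule bind_pmf_cong[OF refl])
    fix ret assume ret: "ret \<in> set_pmf (mu t \<beta> c)"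
    let ?G = "\<lambda>v. if v \<in> K then g else return_pmf 0"
    let ?phi = "\<lambda>v w. if v \<in> K then t + w else ret v"
    have "Pi_pmf ?D 0 (\<lambda>v. ?Q v (ret v)) = Pi_pmf ?D 0 (\<lambda>v. bind_pmf (?G v) (\<lambda>w. return_pmf (?phi v w)))"
      by (intro Pi_pmf_cong refl) (auto simp: map_pmf_def bind_return_pmf)
    also have "\<dots> = bind_pmf (Pi_pmf ?D 0 ?G) (\<lambda>z. Pi_pmf ?D 0 (\<lambda>v. return_pmf (?phi v (z v))))"
      by (rule Pi_pmf_bind) simp
    also have "\<dots> = bind_pmf (Pi_pmf ?D 0 ?G) (\<lambda>z. return_pmf (\<lambda>v. if v \<in> ?D then ?phi v (z v) else 0))"
      by simp
    also have "\<dots> = map_pmf (\<lambda>z v. if v \<in> ?D then ?phi v (z v) else 0) (Pi_pmf ?D 0 ?G)"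
      by (simp add: map_pmf_def)
    also have "Pi_pmf ?D 0 ?G = Pi_pmf K 0 (\<lambda>v. g)"
    proof -
      have "Pi_pmf ?D 0 ?G = Pi_pmf {v \<in> ?D. v \<in> K} 0 (\<lambda>v. g)"
        by (rule Pi_pmf_if_set) simp
      moreover have "{v \<in> ?D. v \<in> K} = K" using K by auto
      ultimately show ?thesis by simp
    qed
    also have "map_pmf (\<lambda>z v. if v \<in> ?D then ?phi v (z v) else 0) (Pi_pmf K 0 (\<lambda>v. g))
        = map_pmf (\<lambda>z v. if v \<in> K then t + z v else ret v) (Pi_pmf K 0 (\<lambda>v. g))"
      using K mu_support(1)[OF ret] by (intro map_pmf_cong refl) (auto simp: fun_eq_iff)
    finally show "Pi_pmf ?D 0 (\<lambda>v. ?Q v (ret v)) = map_pmf (\<lambda>z v. if v \<in> K then t + z v else ret v) (Pi_pmf K 0 (\<lambda>v. g))" .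
  qed
  finally show ?thesis by simp
qed

lemma EXUPD:
  fixes F :: "(nat \<Rightarrow> nat) \<Rightarrow> real"
  assumes K: "K \<subseteq> {1..n}" "\<And>v. v \<in> K \<Longrightarrow> \<beta> v" and bF: "\<And>x. \<bar>F x\<bar> \<le> B"
  shows "measure_pmf.expectation (mu t \<beta> c) (\<lambda>ret. measure_pmf.expectation (Pi_pmf K 0 (\<lambda>v. g))
            (\<lambda>z. F (\<lambda>v. if v \<in> K then t + z v else ret v)))
       = measure_pmf.expectation (mu t (\<lambda>v. \<beta> v \<and> v \<notin> K) c) F"
proof -
  have "measure_pmf.expectation (mu t (\<lambda>v. \<beta> v \<and> v \<notin> K) c) F
      = measure_pmf.expectation (bind_pmf (mu t \<beta> c) (\<lambda>ret. map_pmf (\<lambda>z v. if v \<in> K then t + z v else ret v) (Pi_pmf K 0 (\<lambda>v. g)))) F"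
    by (simp only: UPD[OF K])
  also have "\<dots> = measure_pmf.expectation (mu t \<beta> c) (\<lambda>ret. measure_pmf.expectation (map_pmf (\<lambda>z v. if v \<in> K then t + z v else ret v) (Pi_pmf K 0 (\<lambda>v. g))) F)"
    by (rule ex_bind[where B = B]) (rule bF)
  also have "\<dots> = measure_pmf.expectation (mu t \<beta> c) (\<lambda>ret. measure_pmf.expectation (Pi_pmf K 0 (\<lambda>v. g))
            (\<lambda>z. F (\<lambda>v. if v \<in> K then t + z v else ret v)))"
    by simp
  finally show ?thesis ..
qed

lemma prod_split:
  "(\<Prod>v\<in>{1..n}. if \<beta> v then r else Y) = r ^ card {v \<in> {1..n}. \<beta> v} * Y ^ (n - card {v \<in> {1..n}. \<beta> v})"
proof -
  have s1: "{1..n} \<inter> {x. \<beta> x} = {v \<in> {1..n}. \<beta> v}" by auto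
  have s2: "{1..n} \<inter> - {x. \<beta> x} = {1..n} - {v \<in> {1..n}. \<beta> v}" by auto
  have c2: "card ({1..n} - {v \<in> {1..n}. \<beta> v}) = n - card {v \<in> {1..n}. \<beta> v}"
    by (subst card_Diff_subset) auto
  have "(\<Prod>v\<in>{1..n}. if \<beta> v then r else Y) = (\<Prod>v\<in>{1..n} \<inter> {x. \<beta> x}. r) * (\<Prod>v\<in>{1..n} \<inter> - {x. \<beta> x}. Y)"
    by (rule prod.If_cases) simp
  then show ?thesis unfolding s1 s2 prod_constant c2 .
qed

lemma card_beta_le: "card {v \<in> {1..n}. \<beta> v} \<le> n"
proof -
  have "card {v \<in> {1..n}. \<beta> v} \<le> card {1..n}" by (intro card_mono) auto
  then show ?thesis by simp
qed

lemma HEXP: "measure_pmf.expectation (rho \<beta>) (\<lambda>\<beta>'. Hf (card {v \<in> {1..n}. \<beta>' v})) = Hn (card {v \<in> {1..n}. \<beta> v})"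
proof -
  let ?S = "set_pmf (rho \<beta>)"
  let ?a = "\<lambda>\<beta>'. card {v \<in> {1..n}. \<beta>' v}"
  let ?C = "\<lambda>\<beta>'. CF 0 (?a \<beta>') (n - ?a \<beta>')"
  let ?tm = "\<lambda>j \<beta>'. q * r ^ j * (\<Prod>v\<in>{1..n}. if \<beta>' v then r else r + q * r ^ (j + 0))"
  have fin: "finite ?S" by (rule rho_finite)
  have ex_fin: "measure_pmf.expectation (rho \<beta>) f = (\<Sum>x\<in>?S. pmf (rho \<beta>) x * f x)" for f :: "(nat \<Rightarrow> bool) \<Rightarrow> real"
    by (subst integral_measure_pmf[OF fin]) auto
  have tm_sums: "(\<lambda>j. ?tm j \<beta>') sums ?C \<beta>'" for \<beta>'
    using sums_CF[of "?a \<beta>'" 0 "n - ?a \<beta>'"] unfolding prod_split by (simp add: mult.assoc)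
  have "(\<lambda>j. \<Sum>x\<in>?S. pmf (rho \<beta>) x * ?tm j x) sums (\<Sum>x\<in>?S. pmf (rho \<beta>) x * ?C x)"
    by (intro sums_sum sums_mult tm_sums)
  moreover have "(\<Sum>x\<in>?S. pmf (rho \<beta>) x * ?tm j x) = q * r ^ j * r ^ ?a \<beta> * (r + q * r ^ (j + 1)) ^ (n - ?a \<beta>)" for j
  proof -
    have "(\<Sum>x\<in>?S. pmf (rho \<beta>) x * ?tm j x) = measure_pmf.expectation (rho \<beta>) (?tm j)"
      by (simp only: ex_fin)
    also have "\<dots> = q * r ^ j * measure_pmf.expectation (rho \<beta>) (\<lambda>x. \<Prod>v\<in>{1..n}. if x v then r else r + q * r ^ (j + 0))"
      by simp
    also have "measure_pmf.expectation (rho \<beta>) (\<lambda>x. \<Prod>v\<in>{1..n}. if x v then r else r + q * r ^ (j + 0))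
        = (\<Prod>v\<in>{1..n}. measure_pmf.expectation (if \<beta> v then return_pmf True else bernoulli_pmf q) (\<lambda>b. if b then r else r + q * r ^ (j + 0)))"
      unfolding rho_def
      by (rule expectation_prod_Pi_pmf) (auto intro!: integrable_measure_pmf_finite simp: less_imp_le[OF r_pos] less_imp_le[OF q_pos])
    also have "\<dots> = (\<Prod>v\<in>{1..n}. if \<beta> v then r else r + q * r ^ (j + 1))"
    proof (rule prod.cong[OF refl])
      fix v
      have "q * r + (1 - q) * (r + q * r ^ j) = r + q * r ^ (j + 1)"
        unfolding r_def by (simp add: algebra_simps)
      then show "measure_pmf.expectation (if \<beta> v then return_pmf True else bernoulli_pmf q) (\<lambda>b. if b then r else r + q * r ^ (j + 0))
          = (if \<beta> v then r else r + q * r ^ (j + 1))"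
        using q_pos q_lt1 by (auto simp: r_def algebra_simps)
    qed
    also have "\<dots> = r ^ ?a \<beta> * (r + q * r ^ (j + 1)) ^ (n - ?a \<beta>)" by (rule prod_split)
    finally show ?thesis by (simp add: mult.assoc)
  qed
  ultimately have "(\<lambda>j. q * r ^ j * r ^ ?a \<beta> * (r + q * r ^ (j + 1)) ^ (n - ?a \<beta>)) sums (\<Sum>x\<in>?S. pmf (rho \<beta>) x * ?C x)"
    by simp
  then have EC: "(\<Sum>x\<in>?S. pmf (rho \<beta>) x * ?C x) = CF 1 (?a \<beta>) (n - ?a \<beta>)"
    using sums_CF sums_unique2 by blast
  have "measure_pmf.expectation (rho \<beta>) (\<lambda>\<beta>'. Hf (?a \<beta>')) = (\<Sum>x\<in>?S. pmf (rho \<beta>) x * (1 - ?C x))"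
    by (simp only: ex_fin Hf_def)
  also have "\<dots> = (\<Sum>x\<in>?S. pmf (rho \<beta>) x) - (\<Sum>x\<in>?S. pmf (rho \<beta>) x * ?C x)"
    by (simp add: right_diff_distrib sum_subtractf)
  also have "(\<Sum>x\<in>?S. pmf (rho \<beta>) x) = 1"
    using ex_fin[of "\<lambda>_. 1"] by simp
  finally show ?thesis unfolding EC Hn_def by simp
qed

lemma INDEXP:
  assumes "finite K"
  shows "measure_pmf.expectation (Pi_pmf K False (\<lambda>v. bernoulli_pmf q)) (\<lambda>rr. if {v \<in> K. rr v} = {} then 0 else 1) = 1 - r ^ card K"
proof -
  have finS: "finite (set_pmf (Pi_pmf K False (\<lambda>v. bernoulli_pmf q)))"
    by (subst set_Pi_pmf[OF assms]) (intro finite_PiE_dflt assms, simp)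
  have eq: "(if {v \<in> K. rr v} = {} then 0 else 1) = 1 - (\<Prod>v\<in>K. if rr v then 0 else (1::real))" for rr
    using assms by (auto simp: prod_zero_iff)
  have "measure_pmf.expectation (Pi_pmf K False (\<lambda>v. bernoulli_pmf q)) (\<lambda>rr. \<Prod>v\<in>K. if rr v then 0 else (1::real))
      = (\<Prod>v\<in>K. measure_pmf.expectation (bernoulli_pmf q) (\<lambda>b. if b then 0 else (1::real)))"
    by (rule expectation_prod_Pi_pmf) (auto intro!: integrable_measure_pmf_finite assms)
  also have "\<dots> = r ^ card K" using q_pos q_lt1 by (simp add: r_def)
  finally have P: "measure_pmf.expectation (Pi_pmf K False (\<lambda>v. bernoulli_pmf q)) (\<lambda>rr. \<Prod>v\<in>K. if rr v then 0 else (1::real)) = r ^ card K" .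
  have "measure_pmf.expectation (Pi_pmf K False (\<lambda>v. bernoulli_pmf q)) (\<lambda>rr. if {v \<in> K. rr v} = {} then 0 else 1)
      = measure_pmf.expectation (Pi_pmf K False (\<lambda>v. bernoulli_pmf q)) (\<lambda>rr. 1 - (\<Prod>v\<in>K. if rr v then 0 else (1::real)))"
    by (simp only: eq)
  also have "\<dots> = 1 - r ^ card K"
    using P by (subst Bochner_Integration.integral_diff) (auto intro!: integrable_measure_pmf_finite finS)
  finally show ?thesis .
qed

end

lemma ex_abs_bound:
  fixes f :: "'a \<Rightarrow> real"
  assumes "\<And>x. x \<in> set_pmf M \<Longrightarrow> \<bar>f x\<bar> \<le> B"
  shows "\<bar>measure_pmf.expectation M f\<bar> \<le> B"
proof -
  have int: "integrable (measure_pmf M) f" by (rule integrable_pmf_bounded[OF assms])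
  have ub: "f x \<le> B" if "x \<in> set_pmf M" for x using abs_le_D1[OF assms[OF that]] .
  have lb: "- B \<le> f x" if "x \<in> set_pmf M" for x using abs_le_D2[OF assms[OF that]] by linarith
  have "measure_pmf.expectation M f \<le> measure_pmf.expectation M (\<lambda>x. B)"
    by (intro integral_mono_AE int AE_pmfI ub) auto
  moreover have "measure_pmf.expectation M (\<lambda>x. - B) \<le> measure_pmf.expectation M f"
    by (intro integral_mono_AE int AE_pmfI lb) auto
  ultimately show ?thesis by (simp add: abs_le_iff)
qed

context vol
begin

lemma val_abs: "\<bar>val k t ret h\<bar> \<le> real k" using val_range[of k t ret h] by simp

lemma cv_abs: "\<bar>(if P then 0 else (1::real)) + val k t ret h\<bar> \<le> 1 + real k"
  using val_range[of k t ret h] by auto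

lemma SV_abs: "\<bar>SV k t ret h\<bar> \<le> 1 + real k"
  unfolding SV_def Let_def by (intro ex_abs_bound cv_abs)

definition IHP :: "nat \<Rightarrow> nat \<Rightarrow> bool" where
  "IHP k t \<longleftrightarrow> (\<forall>\<beta> c h. (\<forall>v. \<beta> v \<longrightarrow> c v \<le> t) \<longrightarrow>
     measure_pmf.expectation (mu t \<beta> c) (\<lambda>ret. val k t ret h) \<le> Gc * real k + Hf (card {v \<in> {1..n}. \<beta> v}))"

lemma NS:
  assumes IH: "IHP k (Suc t)" and hc: "\<And>v. \<beta> v \<Longrightarrow> c v \<le> t"
  shows "measure_pmf.expectation (mu t \<beta> c) (\<lambda>ret. val k (Suc t) ret h) \<le> Gc * real k + Hn (card {v \<in> {1..n}. \<beta> v})"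
proof -
  let ?c' = "\<lambda>v. if \<beta> v then c v else Suc t"
  have "measure_pmf.expectation (mu t \<beta> c) (\<lambda>ret. val k (Suc t) ret h)
      = measure_pmf.expectation (rho \<beta>) (\<lambda>\<beta>'. measure_pmf.expectation (mu (Suc t) \<beta>' ?c') (\<lambda>ret. val k (Suc t) ret h))"
    unfolding DEC[of t \<beta> c] by (rule ex_bind[where B = "real k"]) (rule val_abs)
  also have "\<dots> \<le> measure_pmf.expectation (rho \<beta>) (\<lambda>\<beta>'. Gc * real k + Hf (card {v \<in> {1..n}. \<beta>' v}))"
  proof (intro integral_mono integrable_measure_pmf_finite rho_finite)
    fix \<beta>'
    have "\<forall>v. \<beta>' v \<longrightarrow> ?c' v \<le> Suc t"
    proof (intro allI impI)
      fix v show "?c' v \<le> Suc t" using hc[of v] by (cases "\<beta> v") auto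
    qed
    then show "measure_pmf.expectation (mu (Suc t) \<beta>' ?c') (\<lambda>ret. val k (Suc t) ret h) \<le> Gc * real k + Hf (card {v \<in> {1..n}. \<beta>' v})"
      using spec[OF spec[OF spec[OF IH[unfolded IHP_def], of \<beta>'], of ?c'], of h] by (rule rev_mp)
  qed
  also have "\<dots> = Gc * real k + measure_pmf.expectation (rho \<beta>) (\<lambda>\<beta>'. Hf (card {v \<in> {1..n}. \<beta>' v}))"
    by (subst Bochner_Integration.integral_add) (auto intro: integrable_measure_pmf_finite rho_finite)
  also have "\<dots> = Gc * real k + Hn (card {v \<in> {1..n}. \<beta> v})" by (simp only: HEXP)
  finally show ?thesis .
qed

lemma SS:
  fixes h :: history
  assumes IH: "IHP k (Suc t)" and hc: "\<And>v. \<beta> v \<Longrightarrow> c v \<le> t"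
  defines "K \<equiv> {v \<in> pol h 1 \<inter> {1..n}. \<beta> v}"
  shows "measure_pmf.expectation (mu t \<beta> c) (\<lambda>ret. SV k t ret h)
     \<le> 1 - r ^ card K + Gc * real k + Hn (card {v \<in> {1..n}. \<beta> v} - card K)"
proof -
  define N where "N = pol h 1 \<inter> {1..n}"
  have KN: "K = {v \<in> N. \<beta> v}" by (simp add: K_def N_def)
  have KD: "K \<subseteq> {1..n}" and Kb: "\<And>v. v \<in> K \<Longrightarrow> \<beta> v" and finK: "finite K" by (auto simp: K_def)
  define c0 where "c0 = (\<lambda>rr. if {v \<in> K. rr v} = {} then 0 else (1::real))"
  define F where "F = (\<lambda>rr ret'. c0 rr + val k (Suc t) ret' (h @ [Some (1, N, {v \<in> K. rr v})]))"
  have bF: "\<bar>F rr x\<bar> \<le> 1 + real k" for rr x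
    unfolding F_def c0_def by (rule cv_abs)
  define Phi where "Phi = (\<lambda>ret. measure_pmf.expectation (Pi_pmf K False (\<lambda>v. bernoulli_pmf q)) (\<lambda>rr.
       measure_pmf.expectation (Pi_pmf K 0 (\<lambda>v. g)) (\<lambda>z. F rr (\<lambda>v. if v \<in> K then t + z v else ret v))))"
  have SVeq: "SV k t ret h = Phi ret" if ret: "ret \<in> set_pmf (mu t \<beta> c)" for ret
  proof -
    have "{v \<in> N. ret v \<le> t} = K"
    proof -
      have "ret v \<le> t \<longleftrightarrow> \<beta> v" if "v \<in> N" for v
      proof -
        have vD: "v \<in> {1..n}" using that by (simp add: N_def)
        show ?thesis
        proof (cases "\<beta> v")
          case True then show ?thesis using mu_support(2)[OF ret vD] hc by simp
        next
          case False then show ?thesis using mu_support(3)[OF ret vD] by simp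
        qed
      qed
      then show ?thesis unfolding KN by auto
    qed
    note NK = this
    show ?thesis unfolding SV_def Let_def N_def[symmetric] NK Phi_def F_def c0_def ..
  qed
  have "measure_pmf.expectation (mu t \<beta> c) (\<lambda>ret. SV k t ret h) = measure_pmf.expectation (mu t \<beta> c) Phi"
    by (intro integral_cong_AE AE_pmfI) (auto simp: SVeq)
  also have "\<dots> = measure_pmf.expectation (Pi_pmf K False (\<lambda>v. bernoulli_pmf q)) (\<lambda>rr.
       measure_pmf.expectation (mu t \<beta> c) (\<lambda>ret. measure_pmf.expectation (Pi_pmf K 0 (\<lambda>v. g)) (\<lambda>z. F rr (\<lambda>v. if v \<in> K then t + z v else ret v))))"
    unfolding Phi_def by (rule ex_swap[where B = "1 + real k"]) (intro ex_abs_bound bF)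
  also have "\<dots> = measure_pmf.expectation (Pi_pmf K False (\<lambda>v. bernoulli_pmf q)) (\<lambda>rr.
       measure_pmf.expectation (mu t (\<lambda>v. \<beta> v \<and> v \<notin> K) c) (F rr))"
    by (intro integral_cong_AE AE_pmfI EXUPD[where B = "1 + real k", OF KD Kb] bF) auto
  also have "\<dots> \<le> measure_pmf.expectation (Pi_pmf K False (\<lambda>v. bernoulli_pmf q)) (\<lambda>rr.
       c0 rr + (Gc * real k + Hn (card {v \<in> {1..n}. \<beta> v \<and> v \<notin> K})))"
  proof (rule integral_mono)
    show "integrable (measure_pmf (Pi_pmf K False (\<lambda>v. bernoulli_pmf q))) (\<lambda>rr. measure_pmf.expectation (mu t (\<lambda>v. \<beta> v \<and> v \<notin> K) c) (F rr))"
      by (rule integrable_pmf_bounded[where B = "1 + real k"]) (intro ex_abs_bound bF)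
    show "integrable (measure_pmf (Pi_pmf K False (\<lambda>v. bernoulli_pmf q))) (\<lambda>rr. c0 rr + (Gc * real k + Hn (card {v \<in> {1..n}. \<beta> v \<and> v \<notin> K})))"
      by (rule integrable_pmf_bounded[where B = "1 + \<bar>Gc * real k + Hn (card {v \<in> {1..n}. \<beta> v \<and> v \<notin> K})\<bar>"]) (auto simp: c0_def)
    fix rr
    have "measure_pmf.expectation (mu t (\<lambda>v. \<beta> v \<and> v \<notin> K) c) (F rr)
        = c0 rr + measure_pmf.expectation (mu t (\<lambda>v. \<beta> v \<and> v \<notin> K) c) (\<lambda>ret'. val k (Suc t) ret' (h @ [Some (1, N, {v \<in> K. rr v})]))"
      unfolding F_def
      by (subst Bochner_Integration.integral_add) (auto intro: integrable_pmf_bounded[where B = "real k"] val_abs)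
    also have "\<dots> \<le> c0 rr + (Gc * real k + Hn (card {v \<in> {1..n}. \<beta> v \<and> v \<notin> K}))"
      using NS[OF IH, of "\<lambda>v. \<beta> v \<and> v \<notin> K" c] hc by auto
    finally show "measure_pmf.expectation (mu t (\<lambda>v. \<beta> v \<and> v \<notin> K) c) (F rr)
        \<le> c0 rr + (Gc * real k + Hn (card {v \<in> {1..n}. \<beta> v \<and> v \<notin> K}))" .
  qed
  also have "\<dots> = (1 - r ^ card K) + (Gc * real k + Hn (card {v \<in> {1..n}. \<beta> v \<and> v \<notin> K}))"
  proof -
    have IE: "measure_pmf.expectation (Pi_pmf K False (\<lambda>v. bernoulli_pmf q)) c0 = 1 - r ^ card K"
      unfolding c0_def by (rule INDEXP[OF finK])
    have c0a: "\<bar>c0 rr\<bar> \<le> 1" for rr by (simp add: c0_def)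
    show ?thesis
      apply (subst Bochner_Integration.integral_add)
        apply (rule integrable_pmf_bounded[where B = 1], rule c0a)
       apply simp
      apply (simp only: IE)
      apply simp
      done
  qed
  also have "card {v \<in> {1..n}. \<beta> v \<and> v \<notin> K} = card {v \<in> {1..n}. \<beta> v} - card K"
  proof -
    have "{v \<in> {1..n}. \<beta> v \<and> v \<notin> K} = {v \<in> {1..n}. \<beta> v} - K" by auto
    moreover have "K \<subseteq> {v \<in> {1..n}. \<beta> v}" using KD Kb by auto
    ultimately show ?thesis by (simp add: card_Diff_subset finK)
  qed
  finally show ?thesis by simp
qed

end

context vol
begin

lemma val0: "val 0 t ret h = 0" by (simp add: val_def R_def)

lemma MAIN: "2 \<le> t \<Longrightarrow> IHP k t"
proof (induction k arbitrary: t)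
  case 0
  show ?case unfolding IHP_def using Hf_nonneg by (simp add: val0)
next
  case (Suc k)
  have IH: "IHP k (Suc t)" using Suc.IH Suc.prems by simp
  have t1: "t \<noteq> 1" using Suc.prems by simp
  show ?case unfolding IHP_def
  proof (intro allI impI)
    fix \<beta> :: "nat \<Rightarrow> bool" and c :: "nat \<Rightarrow> nat" and h :: history
    assume hc': "\<forall>v. \<beta> v \<longrightarrow> c v \<le> t"
    then have hc: "\<And>v. \<beta> v \<Longrightarrow> c v \<le> t" by blast
    define K where "K = {v \<in> pol h 1 \<inter> {1..n}. \<beta> v}"
    define a where "a = card {v \<in> {1..n}. \<beta> v}"
    have Ka: "card K \<le> a" unfolding K_def a_def by (intro card_mono) auto
    have an: "a \<le> n" unfolding a_def by (rule card_beta_le)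
    have V: "val (Suc k) t ret h = q * SV k t ret h + (1 - q) * val k (Suc t) ret (h @ [None])" for ret
      using VAL[of k t ret h] t1 by simp
    have "measure_pmf.expectation (mu t \<beta> c) (\<lambda>ret. val (Suc k) t ret h)
        = measure_pmf.expectation (mu t \<beta> c) (\<lambda>ret. q * SV k t ret h + (1 - q) * val k (Suc t) ret (h @ [None]))"
      by (simp only: V)
    also have "\<dots> = q * measure_pmf.expectation (mu t \<beta> c) (\<lambda>ret. SV k t ret h)
        + (1 - q) * measure_pmf.expectation (mu t \<beta> c) (\<lambda>ret. val k (Suc t) ret (h @ [None]))"
    proof -
      have i1: "integrable (measure_pmf (mu t \<beta> c)) (\<lambda>ret. SV k t ret h)"
        by (rule integrable_pmf_bounded[where B = "1 + real k"]) (rule SV_abs)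
      have i2: "integrable (measure_pmf (mu t \<beta> c)) (\<lambda>ret. val k (Suc t) ret (h @ [None]))"
        by (rule integrable_pmf_bounded[where B = "real k"]) (rule val_abs)
      show ?thesis
        using Bochner_Integration.integral_add[OF integrable_mult_right[OF i1, of q] integrable_mult_right[OF i2, of "1 - q"]]
        by simp
    qed
    also have "\<dots> \<le> q * (1 - r ^ card K + Gc * real k + Hn (a - card K)) + (1 - q) * (Gc * real k + Hn a)"
    proof (intro add_mono mult_left_mono)
      show "measure_pmf.expectation (mu t \<beta> c) (\<lambda>ret. SV k t ret h) \<le> 1 - r ^ card K + Gc * real k + Hn (a - card K)"
        unfolding K_def a_def by (rule SS[OF IH hc])
      show "measure_pmf.expectation (mu t \<beta> c) (\<lambda>ret. val k (Suc t) ret (h @ [None])) \<le> Gc * real k + Hn a"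
        unfolding a_def by (rule NS[OF IH hc])
    qed (use q_pos q_lt1 in auto)
    also have "\<dots> = Gc * real k + (q * (1 - r ^ card K + Hn (a - card K)) + (1 - q) * Hn a)"
      by (simp add: algebra_simps)
    also have "\<dots> \<le> Gc * real k + (Gc + Hf a)"
      using BI[OF Ka an] by simp
    finally show "measure_pmf.expectation (mu t \<beta> c) (\<lambda>ret. val (Suc k) t ret h) \<le> Gc * real (Suc k) + Hf (card {v \<in> {1..n}. \<beta> v})"
      unfolding a_def by (simp add: algebra_simps)
  qed
qed

lemma FINALVAL: "val (Suc (n ^ 2)) 1 (\<lambda>_. 0) [] \<le> 1 - r ^ n + (real n + 1) * (1 - CF 1 0 n)"
proof -
  define h0 :: history where "h0 = []"
  define K where "K = {v \<in> pol h0 1 \<inter> {1..n}. (\<lambda>_. True) v}"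
  have Kn: "card K \<le> n"
  proof -
    have "card K \<le> card {1..n}" unfolding K_def by (intro card_mono) auto
    then show ?thesis by simp
  qed
  have e: "{v \<in> {1..n::nat}. (\<lambda>_. True) v} = {1..n}" by auto
  have cardn: "card {v \<in> {1..n}. (\<lambda>_. True) v} = n" unfolding e by simp
  have mu1: "mu 1 (\<lambda>_. True) (\<lambda>_. 0) = return_pmf (\<lambda>_. 0)"
    unfolding mu_def by simp
  have "val (Suc (n ^ 2)) 1 (\<lambda>_. 0) [] = SV (n ^ 2) 1 (\<lambda>_. 0) h0"
    using VAL[of "n ^ 2" 1 "\<lambda>_. 0" "[]"] by (simp add: h0_def)
  also have "\<dots> = measure_pmf.expectation (mu 1 (\<lambda>_. True) (\<lambda>_. 0)) (\<lambda>ret. SV (n ^ 2) 1 ret h0)"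
    unfolding mu1 by simp
  also have "\<dots> \<le> 1 - r ^ card K + Gc * real (n ^ 2) + Hn (n - card K)"
    using SS[OF MAIN[of "Suc 1" "n ^ 2"], of "\<lambda>_. True" "\<lambda>_. 0" h0] unfolding K_def cardn by simp
  also have "\<dots> \<le> 1 - r ^ n + Gc * real (n ^ 2) + Hn 0"
    using BI1[OF Kn] by simp
  also have "\<dots> = 1 - r ^ n + (real n + 1) * (1 - CF 1 0 n)"
  proof -
    have "Gc * real (n ^ 2) = (real n * q) * (real n * (1 - CF 1 0 n))"
      unfolding Gc_def by (simp add: power2_eq_square)
    then have "Gc * real (n ^ 2) = real n * (1 - CF 1 0 n)" unfolding nq by simp
    then show ?thesis unfolding Hn_def by (simp add: algebra_simps)
  qed
  finally show ?thesis .
qed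

lemma cdfG_eq: "cdfG g m = 1 - r ^ m"
  unfolding cdfG_def using geo_sum[of m] by (simp add: gq)

lemma lam_sum: "1 \<le> t \<Longrightarrow> (\<Sum>\<tau>\<in>{1..t}. lamf 1 \<tau> * r ^ (t - \<tau>)) = 1"
proof (induction t rule: dec_induct)
  case base then show ?case by simp
next
  case (step t)
  have "(\<Sum>\<tau>\<in>{1..Suc t}. lamf 1 \<tau> * r ^ (Suc t - \<tau>)) = (\<Sum>\<tau>\<in>{1..t}. lamf 1 \<tau> * r ^ (Suc t - \<tau>)) + lamf 1 (Suc t)"
    using step by simp
  also have "(\<Sum>\<tau>\<in>{1..t}. lamf 1 \<tau> * r ^ (Suc t - \<tau>)) = r * (\<Sum>\<tau>\<in>{1..t}. lamf 1 \<tau> * r ^ (t - \<tau>))"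
    unfolding sum_distrib_left
  proof (intro sum.cong refl)
    fix \<tau> assume "\<tau> \<in> {1..t}"
    then have "Suc t - \<tau> = Suc (t - \<tau>)" by auto
    then show "lamf 1 \<tau> * r ^ (Suc t - \<tau>) = r * (lamf 1 \<tau> * r ^ (t - \<tau>))" by simp
  qed
  also have "\<dots> = r" using step by simp
  finally show ?case using step qr by simp
qed

lemma LP_eq: "LP n 1 (n ^ 2 + 1) lamf (\<lambda>v s. q) g = real n + 1"
proof -
  let ?X = "{lp_obj n 1 (n ^ 2 + 1) lamf (\<lambda>v s. q) x | x. lp_feasible n 1 (n ^ 2 + 1) lamf g x}"
  have lam01: "0 \<le> lamf 1 t" "lamf 1 t \<le> 1" for t using q_pos q_lt1 by auto
  have sumlam: "(\<Sum>t\<in>{1..n ^ 2 + 1}. lamf 1 t) = real n + 1"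
  proof -
    have "(\<Sum>t\<in>{1..n ^ 2 + 1}. lamf 1 t) = lamf 1 1 + (\<Sum>t\<in>{2..n ^ 2 + 1}. lamf 1 t)"
      by (subst sum.atLeast_Suc_atMost) (auto simp: numeral_2_eq_2)
    also have "(\<Sum>t\<in>{2..n ^ 2 + 1}. lamf 1 t) = (\<Sum>t\<in>{2..n ^ 2 + 1}. q)"
      by (intro sum.cong refl) auto
    also have "\<dots> = real (n ^ 2) * q" by simp
    also have "\<dots> = real n" using nq by (simp add: power2_eq_square algebra_simps)
    finally show ?thesis by simp
  qed
  have feas: "lp_feasible n 1 (n ^ 2 + 1) lamf g (\<lambda>v s t. 1)"
    unfolding lp_feasible_def
  proof (intro conjI ballI)
    fix v t assume "t \<in> {1..n ^ 2 + 1}"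
    then have t1: "1 \<le> t" by simp
    have "(\<Sum>\<tau>\<in>{1..t}. \<Sum>s\<in>{1..1}. lamf s \<tau> * 1 * (1 - cdfG g (t - \<tau>))) = (\<Sum>\<tau>\<in>{1..t}. lamf 1 \<tau> * r ^ (t - \<tau>))"
      by (simp add: cdfG_eq)
    also have "\<dots> = 1" by (rule lam_sum[OF t1])
    finally show "(\<Sum>\<tau>\<in>{1..t}. \<Sum>s\<in>{1..1}. lamf s \<tau> * 1 * (1 - cdfG g (t - \<tau>))) \<le> 1" by simp
  qed auto
  have obj1: "lp_obj n 1 (n ^ 2 + 1) lamf (\<lambda>v s. q) (\<lambda>v s t. 1) = real n + 1"
  proof -
    have "min (\<Sum>v\<in>{1..n}. 1 * q) 1 = 1" using nq by simp
    then show ?thesis unfolding lp_obj_def using sumlam by simp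
  qed
  have ub: "y \<le> real n + 1" if "y \<in> ?X" for y
  proof -
    from that obtain x where y: "y = lp_obj n 1 (n ^ 2 + 1) lamf (\<lambda>v s. q) x" by blast
    have "y \<le> (\<Sum>t\<in>{1..n ^ 2 + 1}. \<Sum>s\<in>{1..1}. lamf s t * 1)"
      unfolding y lp_obj_def by (intro sum_mono mult_left_mono) (auto simp: lam01 less_imp_le[OF q_pos])
    then show ?thesis using sumlam by simp
  qed
  have "real n + 1 \<in> ?X" unfolding mem_Collect_eq by (rule exI[of _ "\<lambda>v s t. 1"]) (rule conjI[OF obj1[symmetric] feas])
  then have "Sup ?X = real n + 1" by (intro cSup_eq_maximum ub)
  then show ?thesis unfolding LP_def .
qed

end

theorem lemma5:
  fixes n :: nat and q :: real and g :: "nat pmf" and pol :: policy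
  assumes "n \<ge> 2"
    and "q = 1 / real n"
    and "\<And>\<tau>. \<tau> \<ge> 1 \<Longrightarrow> pmf g \<tau> = q * (1 - q) ^ (\<tau> - 1)"
  shows "expected_completed n 1 (n^2 + 1) (\<lambda>s t. if t = 1 then 1 else q) (\<lambda>v s. q) g pol
         \<le> (1 + q - (q * (1 - q)) / (ln (1 / (1 - q)) * (1 + q)) * (1 - exp (-1)))
           * LP n 1 (n^2 + 1) (\<lambda>s t. if t = 1 then 1 else q) (\<lambda>v s. q) g"
proof -
  interpret vol n g pol
  proof unfold_locales
    show "2 \<le> n" by (rule assms(1))
    fix \<tau> :: nat assume "1 \<le> \<tau>"
    then show "pmf g \<tau> = 1 / real n * (1 - 1 / real n) ^ (\<tau> - 1)"
      using assms(2,3) by simp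
  qed
  have qq: "nn.q n = q" using assms(2) q_def by simp
  have E: "expected_completed n 1 (n^2 + 1) (\<lambda>s t. if t = 1 then 1 else q) (\<lambda>v s. q) g pol
      = val (Suc (n^2)) 1 (\<lambda>_. 0) []"
    unfolding expected_completed_def val_def R_def qq by simp
  have L: "LP n 1 (n^2 + 1) (\<lambda>s t. if t = 1 then 1 else q) (\<lambda>v s. q) g = real n + 1"
    using LP_eq unfolding qq .
  have F: "val (Suc (n^2)) 1 (\<lambda>_. 0) [] \<le> (1 + q - (q * (1 - q)) / (ln (1 / (1 - q)) * (1 + q)) * (1 - exp (-1))) * (real n + 1)"
    using order_trans[OF FINALVAL FINAL] unfolding qq .
  show ?thesis unfolding E L using F .
qed

end
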